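(* Let $T:\mathcal{M}_N\to\mathcal{M}_N$ be a bistochastic channel with $T=\hat T$, such that $\hat T$ is strictly contractive with rate $C\in[0,1)$. Then every eigenvalue $\lambda\neq1$ of $\hat T$ satisfies $|\lambda|\le C$, and for every density matrix $\sigma\in\mathcal{D}_N$, $$S[\hat T(\sigma)]-S(\sigma)\ \ge\ \frac{1-C^2}{2}\,\big\|\sigma-N^{-1}\mathbf{1}\big\|_2^2 .$$
   Context: $\mathcal{M}_N$ is the algebra of $N\times N$ complex matrices, $\mathbf{1}$ the identity, $\mathcal{D}_N$ the set of $N\times N$ density matrices. A channel is a linear unital completely positive map $T:\mathcal{M}_N\to\mathcal{M}_N$; its dual $\hat T$ is defined by $\mathrm{tr}[\hat T(A)B]=\mathrm{tr}[A\,T(B)]$ for all $A,B$. $T$ is bistochastic if $T(\mathbf{1})=\hat T(\mathbf{1})=\mathbf{1}$. $\hat T$ is strictly contractive with rate $C\in[0,1)$ if $\|\hat T(\sigma)-\hat T(\sigma')\|_1\le C\|\sigma-\sigma'\|_1$ for all $\sigma,\sigma'\in\mathcal{D}_N$, with $\|A\|_1=\mathrm{tr}(A^*A)^{1/2}$. $\|A\|_2=[\mathrm{tr}(A^*A)]^{1/2}$, and $S(\sigma)=-\mathrm{tr}(\sigma\ln\sigma)$ is the von Neumann entropy. *)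

theory Defs
  imports "Jordan_Normal_Form.Schur_Decomposition" "HOL-Computational_Algebra.Polynomial"
begin

(* M_N is modelled as carrier_mat N N of complex matrices (Jordan_Normal_Form). *)

definition trace :: "complex mat \<Rightarrow> complex" where
  "trace A = (\<Sum>i<dim_row A. A $$ (i, i))"

definition qform :: "complex mat \<Rightarrow> complex vec \<Rightarrow> complex" where
  "qform A v = conjugate v \<bullet> (A *\<^sub>v v)"

definition psd :: "nat \<Rightarrow> complex mat \<Rightarrow> bool" where
  "psd N A \<longleftrightarrow> A \<in> carrier_mat N N \<and> mat_adjoint A = A \<and>
     (\<forall>v \<in> carrier_vec N. Im (qform A v) = 0 \<and> Re (qform A v) \<ge> 0)"

(* a k x k block matrix with N x N blocks B i j, i.e. an element of M_k \<otimes> M_N,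
   is positive semidefinite *)
definition psd_block :: "nat \<Rightarrow> nat \<Rightarrow> (nat \<Rightarrow> nat \<Rightarrow> complex mat) \<Rightarrow> bool" where
  "psd_block k N B \<longleftrightarrow> (\<forall>i<k. \<forall>j<k. B i j \<in> carrier_mat N N) \<and>
     (\<forall>i<k. \<forall>j<k. mat_adjoint (B i j) = B j i) \<and>
     (\<forall>v. (\<forall>i<k. v i \<in> carrier_vec N) \<longrightarrow>
        (let q = (\<Sum>i<k. \<Sum>j<k. conjugate (v i) \<bullet> (B i j *\<^sub>v v j)) in Im q = 0 \<and> Re q \<ge> 0))"

definition linear_map_mat :: "nat \<Rightarrow> (complex mat \<Rightarrow> complex mat) \<Rightarrow> bool" where
  "linear_map_mat N T \<longleftrightarrow>
     (\<forall>A \<in> carrier_mat N N. T A \<in> carrier_mat N N) \<and>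
     (\<forall>A \<in> carrier_mat N N. \<forall>B \<in> carrier_mat N N. T (A + B) = T A + T B) \<and>
     (\<forall>A \<in> carrier_mat N N. \<forall>c. T (c \<cdot>\<^sub>m A) = c \<cdot>\<^sub>m T A)"

(* complete positivity: id_k \<otimes> T is positive for every k *)
definition completely_positive :: "nat \<Rightarrow> (complex mat \<Rightarrow> complex mat) \<Rightarrow> bool" where
  "completely_positive N T \<longleftrightarrow>
     (\<forall>k B. psd_block k N B \<longrightarrow> psd_block k N (\<lambda>i j. T (B i j)))"

definition channel :: "nat \<Rightarrow> (complex mat \<Rightarrow> complex mat) \<Rightarrow> bool" where
  "channel N T \<longleftrightarrow> linear_map_mat N T \<and> T (1\<^sub>m N) = 1\<^sub>m N \<and> completely_positive N T"

definition is_dual :: "nat \<Rightarrow> (complex mat \<Rightarrow> complex mat) \<Rightarrow> (complex mat \<Rightarrow> complex mat) \<Rightarrow> bool" where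
  "is_dual N T Td \<longleftrightarrow> (\<forall>A \<in> carrier_mat N N. \<forall>B \<in> carrier_mat N N.
      trace (Td A * B) = trace (A * T B))"

definition bistochastic :: "nat \<Rightarrow> (complex mat \<Rightarrow> complex mat) \<Rightarrow> (complex mat \<Rightarrow> complex mat) \<Rightarrow> bool" where
  "bistochastic N T Td \<longleftrightarrow> T (1\<^sub>m N) = 1\<^sub>m N \<and> Td (1\<^sub>m N) = 1\<^sub>m N"

definition density :: "nat \<Rightarrow> complex mat \<Rightarrow> bool" where
  "density N \<sigma> \<longleftrightarrow> psd N \<sigma> \<and> trace \<sigma> = 1"

definition eigvals_mset :: "complex mat \<Rightarrow> complex multiset" where
  "eigvals_mset A = proots (char_poly A)"

(* trace norm tr (A^* A)^{1/2}: sum of the square roots of the eigenvalues of A^* A *)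
definition trace_norm :: "complex mat \<Rightarrow> real" where
  "trace_norm A = (\<Sum>\<mu> \<in># eigvals_mset (mat_adjoint A * A). sqrt (Re \<mu>))"

definition hs_norm :: "complex mat \<Rightarrow> real" where
  "hs_norm A = sqrt (Re (trace (mat_adjoint A * A)))"

definition eta :: "real \<Rightarrow> real" where
  "eta x = (if x = 0 then 0 else x * ln x)"

(* von Neumann entropy S(\<sigma>) = - tr (\<sigma> ln \<sigma>) = - \<Sum> \<lambda> ln \<lambda> over eigenvalues *)
definition vn_entropy :: "complex mat \<Rightarrow> real" where
  "vn_entropy \<sigma> = - (\<Sum>x \<in># eigvals_mset \<sigma>. eta (Re x))"

definition strictly_contractive :: "nat \<Rightarrow> (complex mat \<Rightarrow> complex mat) \<Rightarrow> real \<Rightarrow> bool" where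
  "strictly_contractive N Td C \<longleftrightarrow> 0 \<le> C \<and> C < 1 \<and>
     (\<forall>\<sigma> \<sigma>'. density N \<sigma> \<longrightarrow> density N \<sigma>' \<longrightarrow>
        trace_norm (Td \<sigma> - Td \<sigma>') \<le> C * trace_norm (\<sigma> - \<sigma>'))"

definition map_eigenvalue :: "nat \<Rightarrow> (complex mat \<Rightarrow> complex mat) \<Rightarrow> complex \<Rightarrow> bool" where
  "map_eigenvalue N Td z \<longleftrightarrow> (\<exists>X \<in> carrier_mat N N. X \<noteq> 0\<^sub>m N N \<and> Td X = z \<cdot>\<^sub>m X)"

end

theory Submission
  imports Defs "HOL-Analysis.Convex"
begin


type_synonym cmat = "complex mat"

lemma adj_dim[simp]: "dim_row (mat_adjoint A) = dim_col A" "dim_col (mat_adjoint A) = dim_row A"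
  unfolding mat_adjoint_def mat_of_rows_def by auto

lemma adj_index[simp]: "i < dim_col A \<Longrightarrow> j < dim_row A \<Longrightarrow> mat_adjoint A $$ (i,j) = cnj (A $$ (j,i))"
  unfolding mat_adjoint_def mat_of_rows_def by auto

lemma adj_carrier[simp]: "(A::cmat) \<in> carrier_mat n m \<Longrightarrow> mat_adjoint A \<in> carrier_mat m n"
  unfolding carrier_mat_def by auto

lemma mult_index: "(A::cmat) \<in> carrier_mat n k \<Longrightarrow> B \<in> carrier_mat k m \<Longrightarrow> i < n \<Longrightarrow> j < m \<Longrightarrow>
   (A*B) $$ (i,j) = (\<Sum>l<k. A$$(i,l) * B$$(l,j))"
  by (auto simp: scalar_prod_def atLeast0LessThan intro!: sum.cong)

lemma row_col_sum: "i < dim_row A \<Longrightarrow> j < dim_col B \<Longrightarrow> dim_col A = dim_row B \<Longrightarrow>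
  row A i \<bullet> col B j = (\<Sum>l<dim_row B. A$$(i,l) * B$$(l,j))"
  by (auto simp: scalar_prod_def atLeast0LessThan intro!: sum.cong)

lemma assoc_dim: "dim_col A = dim_row B \<Longrightarrow> dim_col B = dim_row C \<Longrightarrow> (A * B) * C = A * (B * C)"
  by (rule assoc_mult_mat[of A "dim_row A" "dim_col A" B "dim_col B" C "dim_col C"], auto)

lemma adj_mult: assumes A: "(A::cmat) \<in> carrier_mat n k" and B: "B \<in> carrier_mat k m"
  shows "mat_adjoint (A * B) = mat_adjoint B * mat_adjoint A"
proof (rule eq_matI)
  fix i j assume i: "i < dim_row (mat_adjoint B * mat_adjoint A)" and j: "j < dim_col (mat_adjoint B * mat_adjoint A)"
  hence i: "i < m" and j: "j < n" using A B by auto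
  have "mat_adjoint (A*B) $$ (i,j) = cnj ((A*B)$$(j,i))" using i j A B by simp
  also have "\<dots> = cnj (\<Sum>l<k. A$$(j,l) * B$$(l,i))" using mult_index[OF A B j i] by simp
  also have "\<dots> = (\<Sum>l<k. mat_adjoint B $$ (i,l) * mat_adjoint A $$ (l,j))"
    using i j A B by (auto simp: mult.commute intro!: sum.cong)
  also have "\<dots> = (mat_adjoint B * mat_adjoint A) $$ (i,j)"
    by (rule mult_index[symmetric], insert A B i j, auto)
  finally show "mat_adjoint (A * B) $$ (i, j) = (mat_adjoint B * mat_adjoint A) $$ (i, j)" .
qed (insert A B, auto)

lemma adj_mult_dim: "dim_col (A::cmat) = dim_row B \<Longrightarrow> mat_adjoint (A * B) = mat_adjoint B * mat_adjoint A"
  by (rule adj_mult[of A "dim_row A" "dim_col A" B "dim_col B"], auto)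

lemma adj_adj[simp]: "mat_adjoint (mat_adjoint (A::cmat)) = A"
  by (rule eq_matI, auto)

lemma adj_one[simp]: "mat_adjoint (1\<^sub>m n :: cmat) = 1\<^sub>m n"
  by (rule eq_matI, auto)

lemma adj_add: "(A::cmat) \<in> carrier_mat n m \<Longrightarrow> B \<in> carrier_mat n m \<Longrightarrow> mat_adjoint (A + B) = mat_adjoint A + mat_adjoint B"
  by (rule eq_matI, auto)

lemma adj_minus: "(A::cmat) \<in> carrier_mat n m \<Longrightarrow> B \<in> carrier_mat n m \<Longrightarrow> mat_adjoint (A - B) = mat_adjoint A - mat_adjoint B"
  by (rule eq_matI, auto)

lemma adj_smult: "mat_adjoint (c \<cdot>\<^sub>m (A::cmat)) = cnj c \<cdot>\<^sub>m mat_adjoint A"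
  by (rule eq_matI, auto)

lemma cself_real: "(w::complex vec) \<bullet>c w = of_real (\<Sum>l<dim_vec w. (cmod (w$l))^2)"
  unfolding scalar_prod_def of_real_sum
  by (auto simp: atLeast0LessThan intro!: sum.cong, metis complex_norm_square of_real_power)

lemma onb_exists: assumes u: "(u::complex vec) \<in> carrier_vec n" and u1: "u \<bullet>c u = 1"
  shows "\<exists>U. U \<in> carrier_mat n n \<and> mat_adjoint U * U = 1\<^sub>m n \<and> col U 0 = u"
proof -
  interpret cof_vec_space n "TYPE(complex)" .
  have u0: "u \<noteq> 0\<^sub>v n" using u1 u by auto
  define b where "b = basis_completion u"
  from basis_completion[OF u u0, folded b_def]
  have dist_b: "distinct b" and indep: "\<not> lin_dep (set b)" and b: "set b \<subseteq> carrier_vec n" and hdb: "hd b = u"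
    and len_b: "length b = n" by auto
  have n: "n \<noteq> 0"
  proof
    assume "n = 0"
    hence "u = 0\<^sub>v n" using u by (intro eq_vecI, auto)
    thus False using u0 by simp
  qed
  from hdb len_b n obtain vs where bv: "b = u # vs" by (cases b, auto)
  define ws where "ws = gram_schmidt n b"
  from gram_schmidt_result[OF b dist_b indep refl, folded ws_def]
  have ws: "set ws \<subseteq> carrier_vec n" "corthogonal ws" "length ws = n" 
    by (auto simp: len_b)
  from gram_schmidt_hd[OF u, of vs, folded bv] have hdws: "hd ws = u" unfolding ws_def .
  define nw where "nw = (\<lambda>w::complex vec. sqrt (\<Sum>l<n. (cmod (w$l))^2))"
  define us where "us = map (\<lambda>w. (1 / complex_of_real (nw w)) \<cdot>\<^sub>v w) ws"
  have wsi: "ws ! i \<in> carrier_vec n" if "i < n" for i using ws that by auto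
  have self: "ws ! i \<bullet>c ws ! i = of_real ((nw (ws ! i))^2)" if "i < n" for i
    using cself_real[of "ws ! i"] wsi[OF that] unfolding nw_def by (simp add: sum_nonneg)
  have nz: "nw (ws ! i) \<noteq> 0" if "i < n" for i
    using self[OF that] corthogonalD[OF ws(2), of i i] that ws(3) by auto
  define U where "U = mat_of_cols n us"
  have U: "U \<in> carrier_mat n n" unfolding U_def us_def using ws by auto
  have Uidx: "U $$ (l,i) = (1 / complex_of_real (nw (ws ! i))) * (ws ! i) $ l" if "l < n" "i < n" for l i
    using that ws wsi[OF that(2)] unfolding U_def us_def mat_of_cols_def by auto
  have "mat_adjoint U * U = 1\<^sub>m n"
  proof (rule eq_matI)
    fix i j assume "i < dim_row (1\<^sub>m n :: cmat)" "j < dim_col (1\<^sub>m n :: cmat)"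
    hence i: "i < n" and j: "j < n" by auto
    have "(mat_adjoint U * U) $$ (i,j) = (\<Sum>l<n. cnj (U $$ (l,i)) * U $$ (l,j))"
      by (subst mult_index[of _ n n _ n], insert U i j, auto intro!: sum.cong)
    also have "\<dots> = cnj (1 / complex_of_real (nw (ws ! i))) * (1 / complex_of_real (nw (ws ! j))) * (ws ! j \<bullet>c ws ! i)"
      unfolding scalar_prod_def sum_distrib_left using wsi[OF i] wsi[OF j]
      by (auto simp: Uidx i j atLeast0LessThan intro!: sum.cong)
    also have "\<dots> = 1\<^sub>m n $$ (i,j)"
    proof (cases "i = j")
      case True
      thus ?thesis using self[OF i] nz[OF i] i by (simp add: power2_eq_square)
    next
      case False
      thus ?thesis using corthogonalD[OF ws(2), of j i] i j ws(3) by auto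
    qed
    finally show "(mat_adjoint U * U) $$ (i,j) = 1\<^sub>m n $$ (i,j)" .
  qed (insert U, auto)
  moreover have "col U 0 = u"
  proof -
    have hd0: "ws ! 0 = u" using hdws ws(3) n by (cases ws, auto)
    have "(complex_of_real (nw u))^2 = 1" using self[of 0] n hd0 u1 by simp
    hence "(nw u)^2 = 1" by (metis of_real_eq_1_iff of_real_power)
    moreover have "nw u \<ge> 0" unfolding nw_def by (simp add: sum_nonneg)
    ultimately have "nw u = 1" by (simp add: power2_eq_1_iff)
    thus ?thesis using hd0 n u unfolding U_def us_def using ws
      by (intro eq_vecI, auto simp: mat_of_cols_def)
  qed
  ultimately show ?thesis using U by blast
qed

definition extc :: "complex \<Rightarrow> cmat \<Rightarrow> cmat" where
  "extc c M = mat (Suc (dim_row M)) (Suc (dim_col M)) (\<lambda>(i,j). if i = 0 \<and> j = 0 then c else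
     if i = 0 \<or> j = 0 then 0 else M $$ (i - 1, j - 1))"

lemma extc_carrier[simp]: "M \<in> carrier_mat m k \<Longrightarrow> extc c M \<in> carrier_mat (Suc m) (Suc k)"
  unfolding extc_def carrier_mat_def by auto

lemma extc_mult: assumes M: "M \<in> carrier_mat m m" and M': "M' \<in> carrier_mat m m"
  shows "extc c M * extc c' M' = extc (c * c') (M * M')"
proof (rule eq_matI)
  fix i j assume "i < dim_row (extc (c * c') (M * M'))" "j < dim_col (extc (c * c') (M * M'))"
  hence i: "i < Suc m" and j: "j < Suc m" using M M' by (auto simp: extc_def)
  have "(extc c M * extc c' M') $$ (i,j) = (\<Sum>l<Suc m. extc c M $$ (i,l) * extc c' M' $$ (l,j))"
    by (rule mult_index, insert M M' i j, auto)
  also have "\<dots> = extc c M $$ (i,0) * extc c' M' $$ (0,j) + (\<Sum>l<m. extc c M $$ (i,Suc l) * extc c' M' $$ (Suc l,j))"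
    by (rule sum.lessThan_Suc_shift)
  also have "\<dots> = extc (c * c') (M * M') $$ (i,j)"
  proof (cases i)
    case 0
    then show ?thesis using M M' j by (cases j, auto simp: extc_def)
  next
    case (Suc i')
    then show ?thesis using M M' i j
      by (cases j, auto simp: extc_def row_col_sum)
  qed
  finally show "(extc c M * extc c' M') $$ (i,j) = extc (c * c') (M * M') $$ (i,j)" .
qed (insert M M', auto simp: extc_def)

lemma extc_adj: "mat_adjoint (extc c M) = extc (cnj c) (mat_adjoint M)"
  by (rule eq_matI, auto simp: extc_def)

lemma extc_one: "extc 1 (1\<^sub>m m) = 1\<^sub>m (Suc m)"
  by (rule eq_matI, auto simp: extc_def)

definition dmat :: "nat \<Rightarrow> (nat \<Rightarrow> real) \<Rightarrow> cmat" where
  "dmat n d = mat n n (\<lambda>(i,j). if i = j then complex_of_real (d i) else 0)"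

lemma dmat_carrier[simp]: "dmat n d \<in> carrier_mat n n"
  unfolding dmat_def by auto

lemma dmat_dim[simp]: "dim_row (dmat n d) = n" "dim_col (dmat n d) = n"
  unfolding dmat_def by auto

lemma dmat_Suc: "dmat (Suc m) d = extc (of_real (d 0)) (dmat m (\<lambda>i. d (Suc i)))"
  by (rule eq_matI, auto simp: extc_def dmat_def)

definition unitary :: "nat \<Rightarrow> cmat \<Rightarrow> bool" where
  "unitary n U \<longleftrightarrow> U \<in> carrier_mat n n \<and> mat_adjoint U * U = 1\<^sub>m n"

lemma unitary_carrier: "unitary n U \<Longrightarrow> U \<in> carrier_mat n n" unfolding unitary_def by auto
lemma unitary_left: "unitary n U \<Longrightarrow> mat_adjoint U * U = 1\<^sub>m n" unfolding unitary_def by auto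
lemma unitary_right: "unitary n U \<Longrightarrow> U * mat_adjoint U = 1\<^sub>m n"
  unfolding unitary_def using mat_mult_left_right_inverse[of "mat_adjoint U" n U] by auto

lemma eigvec_unit: assumes A: "(A::cmat) \<in> carrier_mat n n" and ev: "eigenvalue A e"
  shows "\<exists>u. u \<in> carrier_vec n \<and> u \<bullet>c u = 1 \<and> A *\<^sub>v u = e \<cdot>\<^sub>v u"
proof -
  from ev obtain v where v: "v \<in> carrier_vec n" "v \<noteq> 0\<^sub>v n" "A *\<^sub>v v = e \<cdot>\<^sub>v v"
    unfolding eigenvalue_def eigenvector_def using A by auto
  define s where "s = (\<Sum>l<n. (cmod (v$l))^2)"
  have "s \<noteq> 0"
  proof
    assume "s = 0"
    hence "\<forall>l\<in>{..<n}. (cmod (v$l))^2 = 0" unfolding s_def using sum_nonneg_eq_0_iff[of "{..<n}" "\<lambda>l. (cmod (v$l))^2"] by simp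
    hence "v = 0\<^sub>v n" using v(1) by (intro eq_vecI, auto)
    thus False using v(2) by simp
  qed
  moreover have "s \<ge> 0" unfolding s_def by (simp add: sum_nonneg)
  ultimately have s: "s > 0" by simp
  define r where "r = complex_of_real (sqrt s)"
  define a where "a = 1 / r"
  have ne: "r \<noteq> 0" using s unfolding r_def by simp
  have a1: "a * r = 1" using ne unfolding a_def by simp
  have ca: "cnj a = a" unfolding a_def r_def by simp
  have sq: "r * r = of_real s" unfolding r_def of_real_mult[symmetric]
    using s by simp
  define u where "u = a \<cdot>\<^sub>v v"
  have u: "u \<in> carrier_vec n" unfolding u_def using v by auto
  have vv: "v \<bullet>c v = of_real s" using cself_real[of v] v(1) unfolding s_def by simp
  have uu: "u \<bullet>c u = a * cnj a * (v \<bullet>c v)"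
    unfolding u_def scalar_prod_def sum_distrib_left using v(1)
    by (auto intro!: sum.cong simp: atLeast0LessThan)
  have "u \<bullet>c u = (a * r) * (a * r)"
    unfolding uu vv ca sq[symmetric] by (simp only: ac_simps)
  hence "u \<bullet>c u = 1" unfolding a1 by simp
  moreover have "A *\<^sub>v u = e \<cdot>\<^sub>v u"
  proof -
    have "A *\<^sub>v u = a \<cdot>\<^sub>v (A *\<^sub>v v)" unfolding u_def using v A by (simp add: mult_mat_vec)
    also have "\<dots> = (a * e) \<cdot>\<^sub>v v" unfolding v(3) by (simp add: smult_smult_assoc)
    also have "\<dots> = e \<cdot>\<^sub>v u" unfolding u_def by (simp add: smult_smult_assoc mult.commute)
    finally show ?thesis .
  qed
  ultimately show ?thesis using u by blast
qed


theorem herm_diag: "(A::cmat) \<in> carrier_mat n n \<Longrightarrow> mat_adjoint A = A \<Longrightarrow>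
  \<exists>U d. unitary n U \<and> A = U * dmat n d * mat_adjoint U"
proof (induction n arbitrary: A)
  case 0
  have "A = 1\<^sub>m 0 * dmat 0 (\<lambda>_. 0) * mat_adjoint (1\<^sub>m 0)"
    using 0 by (intro eq_matI, auto)
  moreover have "unitary 0 (1\<^sub>m 0)" unfolding unitary_def by auto
  ultimately show ?case by blast
next
  case (Suc m A)
  let ?n = "Suc m"
  have A: "A \<in> carrier_mat ?n ?n" and AH: "mat_adjoint A = A" using Suc by auto
  obtain as where cp: "char_poly A = (\<Prod>a\<leftarrow>as. [:- a, 1:])" and las: "length as = ?n"
    using char_poly_factorized[OF A] by auto
  then obtain e rest where as: "as = e # rest" by (cases as, auto)
  have "poly (char_poly A) e = 0" unfolding cp as by simp
  hence "eigenvalue A e" using eigenvalue_root_char_poly[OF A] by simp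
  from eigvec_unit[OF A this] obtain u where u: "u \<in> carrier_vec ?n" "u \<bullet>c u = 1" "A *\<^sub>v u = e \<cdot>\<^sub>v u"
    by auto
  from onb_exists[OF u(1,2)] obtain U1 where U1: "U1 \<in> carrier_mat ?n ?n" and U1u: "mat_adjoint U1 * U1 = 1\<^sub>m ?n"
    and c0: "col U1 0 = u" by auto
  have U1un: "unitary ?n U1" unfolding unitary_def using U1 U1u by auto
  note U1r = unitary_right[OF U1un]
  define A' where "A' = mat_adjoint U1 * A * U1"
  have A'c: "A' \<in> carrier_mat ?n ?n" unfolding A'_def using U1 A by auto
  have A'H: "mat_adjoint A' = A'"
  proof -
    have "mat_adjoint A' = mat_adjoint U1 * mat_adjoint (mat_adjoint U1 * A)"
      unfolding A'_def by (rule adj_mult[of _ ?n ?n _ ?n], insert U1 A, auto)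
    also have "mat_adjoint (mat_adjoint U1 * A) = mat_adjoint A * U1"
      using adj_mult[of "mat_adjoint U1" ?n ?n A ?n] U1 A by simp
    finally show ?thesis unfolding AH A'_def
      using assoc_mult_mat[of "mat_adjoint U1" ?n ?n A ?n U1 ?n] U1 A by simp
  qed
  have AU: "(A * U1) $$ (l,0) = e * U1 $$ (l,0)" if l: "l < ?n" for l
  proof -
    have "(A * U1) $$ (l,0) = (A *\<^sub>v col U1 0) $ l" using A U1 l by simp
    also have "\<dots> = e * U1 $$ (l,0)"
    proof -
      have ul: "u $ l = U1 $$ (l,0)" using c0[symmetric] l U1 by simp
      show ?thesis unfolding c0 u(3) using u(1) l ul by simp
    qed
    finally show ?thesis .
  qed
  have col0: "A' $$ (i,0) = (if i = 0 then e else 0)" if i: "i < ?n" for i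
  proof -
    have "A' $$ (i,0) = (mat_adjoint U1 * (A * U1)) $$ (i,0)" unfolding A'_def
      using assoc_mult_mat[of "mat_adjoint U1" ?n ?n A ?n U1 ?n] U1 A by simp
    also have "\<dots> = (\<Sum>l<?n. mat_adjoint U1 $$ (i,l) * (A * U1) $$ (l,0))"
      by (rule mult_index, insert U1 A i, auto)
    also have "\<dots> = e * (\<Sum>l<?n. mat_adjoint U1 $$ (i,l) * U1 $$ (l,0))"
      unfolding sum_distrib_left by (rule sum.cong, auto simp: AU)
    also have "(\<Sum>l<?n. mat_adjoint U1 $$ (i,l) * U1 $$ (l,0)) = (mat_adjoint U1 * U1) $$ (i,0)"
      by (rule mult_index[symmetric], insert U1 i, auto)
    finally show ?thesis unfolding U1u using i by auto
  qed
  have e_real: "cnj e = e"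
  proof -
    have "A' $$ (0,0) = mat_adjoint A' $$ (0,0)" using A'H by simp
    thus ?thesis using col0[of 0] A'c by auto
  qed
  have row0: "A' $$ (0,j) = (if j = 0 then e else 0)" if j: "j < ?n" for j
  proof -
    have "A' $$ (0,j) = mat_adjoint A' $$ (0,j)" using A'H by simp
    thus ?thesis using col0[OF j] A'c j e_real by auto
  qed
  define A3 where "A3 = mat m m (\<lambda>(i,j). A' $$ (Suc i, Suc j))"
  have A3c: "A3 \<in> carrier_mat m m" unfolding A3_def by auto
  have A3H: "mat_adjoint A3 = A3"
  proof (rule eq_matI)
    fix i j assume "i < dim_row A3" "j < dim_col A3"
    hence i: "i < m" and j: "j < m" unfolding A3_def by auto
    have "A' $$ (Suc i, Suc j) = mat_adjoint A' $$ (Suc i, Suc j)" using A'H by simp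
    thus "mat_adjoint A3 $$ (i,j) = A3 $$ (i,j)" using i j A'c unfolding A3_def by auto
  qed (auto simp: A3_def)
  have A'ext: "A' = extc e A3"
  proof (rule eq_matI)
    fix i j assume "i < dim_row (extc e A3)" "j < dim_col (extc e A3)"
    hence i: "i < ?n" and j: "j < ?n" unfolding A3_def extc_def by auto
    show "A' $$ (i,j) = extc e A3 $$ (i,j)"
      using i j col0[OF i] row0[OF j] unfolding extc_def A3_def
      by (cases i; cases j; auto)
  qed (insert A'c, auto simp: A3_def extc_def)
  from Suc.IH[OF A3c A3H] obtain U3 d3 where U3un: "unitary m U3" and A3eq: "A3 = U3 * dmat m d3 * mat_adjoint U3"
    by auto
  have U3: "U3 \<in> carrier_mat m m" using U3un unitary_carrier by auto
  define E where "E = extc 1 U3"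
  have Ec: "E \<in> carrier_mat ?n ?n" unfolding E_def using U3 by auto
  define d where "d = (\<lambda>i. if i = 0 then Re e else d3 (i - 1))"
  have D: "dmat ?n d = extc e (dmat m d3)"
  proof -
    have "Im e = 0" using arg_cong[OF e_real, of Im] by simp
    hence "of_real (Re e) = e" by (simp add: complex_eq_iff)
    thus ?thesis unfolding dmat_Suc d_def by simp
  qed
  have EDE: "E * dmat ?n d * mat_adjoint E = A'"
  proof -
    have "E * dmat ?n d * mat_adjoint E = extc 1 U3 * extc e (dmat m d3) * extc 1 (mat_adjoint U3)"
      unfolding E_def D extc_adj by simp
    also have "\<dots> = extc e (U3 * dmat m d3) * extc 1 (mat_adjoint U3)"
      using U3 extc_mult[of U3 m "dmat m d3" 1 e] by simp
    also have "\<dots> = extc e (U3 * dmat m d3 * mat_adjoint U3)"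
      using U3 extc_mult[of "U3 * dmat m d3" m "mat_adjoint U3" e 1] by simp
    finally show ?thesis unfolding A'ext A3eq .
  qed
  define U where "U = U1 * E"
  have Uc: "U \<in> carrier_mat ?n ?n" unfolding U_def using U1 Ec by auto
  have "mat_adjoint U * U = 1\<^sub>m ?n"
  proof -
    have "mat_adjoint U * U = mat_adjoint E * mat_adjoint U1 * (U1 * E)"
      unfolding U_def using adj_mult[of U1 ?n ?n E ?n] U1 Ec by simp
    also have "\<dots> = mat_adjoint E * (mat_adjoint U1 * (U1 * E))"
      by (rule assoc_mult_mat[of _ ?n ?n _ ?n _ ?n], insert U1 Ec, auto)
    also have "mat_adjoint U1 * (U1 * E) = (mat_adjoint U1 * U1) * E"
      by (rule assoc_mult_mat[symmetric, of _ ?n ?n _ ?n _ ?n], insert U1 Ec, auto)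
    finally have "mat_adjoint U * U = mat_adjoint E * E" unfolding U1u using Ec by simp
    also have "\<dots> = extc 1 (mat_adjoint U3 * U3)"
      unfolding E_def extc_adj using U3 extc_mult[of "mat_adjoint U3" m U3 1 1] by simp
    finally show ?thesis using unitary_left[OF U3un] extc_one by simp
  qed
  hence Uun: "unitary ?n U" unfolding unitary_def using Uc by auto
  have "A = U1 * A' * mat_adjoint U1"
  proof -
    have "U1 * A' * mat_adjoint U1 = (U1 * mat_adjoint U1) * A * (U1 * mat_adjoint U1)"
      unfolding A'_def using U1 A by (simp add: assoc_dim)
    thus ?thesis unfolding U1r using A by simp
  qed
  also have "\<dots> = U * dmat ?n d * mat_adjoint U"
  proof -
    have "mat_adjoint U = mat_adjoint E * mat_adjoint U1" unfolding U_def using adj_mult[of U1 ?n ?n E ?n] U1 Ec by simp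
    thus ?thesis unfolding EDE[symmetric] U_def using U1 Ec by (simp add: assoc_dim)
  qed
  finally show ?case using Uun by blast
qed


definition srep :: "nat \<Rightarrow> cmat \<Rightarrow> cmat \<Rightarrow> (nat \<Rightarrow> real) \<Rightarrow> bool" where
  "srep n A U d \<longleftrightarrow> unitary n U \<and> A = U * dmat n d * mat_adjoint U"

lemma herm_srep: "A \<in> carrier_mat n n \<Longrightarrow> mat_adjoint A = A \<Longrightarrow> \<exists>U d. srep n A U d"
  using herm_diag unfolding srep_def by blast

lemma unit_dims: "unitary n U \<Longrightarrow> dim_row U = n \<and> dim_col U = n"
  unfolding unitary_def by auto

lemma unit_cancel_l: assumes U: "unitary n U" and Xd: "dim_row X = n" shows "mat_adjoint U * (U * X) = X"
proof -
  have X: "X \<in> carrier_mat n (dim_col X)" using Xd by (intro carrier_matI, auto)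
  have "mat_adjoint U * (U * X) = (mat_adjoint U * U) * X" using Xd unit_dims[OF U] by (simp add: assoc_dim)
  also have "\<dots> = X" unfolding unitary_left[OF U] by (rule left_mult_one_mat[OF X])
  finally show ?thesis .
qed

lemma unit_cancel_r: assumes U: "unitary n U" and Xd: "dim_row X = n" shows "U * (mat_adjoint U * X) = X"
proof -
  have X: "X \<in> carrier_mat n (dim_col X)" using Xd by (intro carrier_matI, auto)
  have "U * (mat_adjoint U * X) = (U * mat_adjoint U) * X" using Xd unit_dims[OF U] by (simp add: assoc_dim)
  also have "\<dots> = X" unfolding unitary_right[OF U] by (rule left_mult_one_mat[OF X])
  finally show ?thesis .
qed

lemma srep_carrier: assumes "srep n A U d" shows "A \<in> carrier_mat n n"
proof -
  have U: "unitary n U" and A: "A = U * dmat n d * mat_adjoint U" using assms unfolding srep_def by auto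
  have "dim_row U = n" "dim_col U = n" using unit_dims[OF U] by auto
  thus ?thesis unfolding A by (intro carrier_matI, simp_all)
qed

lemma srep_herm: "srep n A U d \<Longrightarrow> mat_adjoint A = A"
proof -
  assume s: "srep n A U d"
  hence U: "unitary n U" and A: "A = U * dmat n d * mat_adjoint U" unfolding srep_def by auto
  have Uc: "U \<in> carrier_mat n n" using unitary_carrier[OF U] .
  have adm: "mat_adjoint (dmat n d) = dmat n d" by (rule eq_matI, auto simp: dmat_def)
  show ?thesis unfolding A using Uc
    by (simp add: adj_mult_dim adm assoc_dim)
qed

lemma dmat_mult: "dmat n d * dmat n d' = dmat n (\<lambda>i. d i * d' i)"
proof (rule eq_matI)
  fix i j assume "i < dim_row (dmat n (\<lambda>i. d i * d' i))" "j < dim_col (dmat n (\<lambda>i. d i * d' i))"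
  hence i: "i < n" and j: "j < n" by auto
  have "(dmat n d * dmat n d') $$ (i,j) = (\<Sum>l<n. dmat n d $$ (i,l) * dmat n d' $$ (l,j))"
    by (rule mult_index, insert i j, auto)
  also have "\<dots> = (\<Sum>l\<in>{i}. dmat n d $$ (i,l) * dmat n d' $$ (l,j))"
    by (rule sum.mono_neutral_right, insert i j, auto simp: dmat_def)
  finally show "(dmat n d * dmat n d') $$ (i,j) = dmat n (\<lambda>i. d i * d' i) $$ (i,j)"
    using i j by (auto simp: dmat_def)
qed auto

lemma srep_sq: assumes "srep n A U d" shows "srep n (mat_adjoint A * A) U (\<lambda>i. (d i)^2)"
proof -
  have U: "unitary n U" and A: "A = U * dmat n d * mat_adjoint U" using assms unfolding srep_def by auto
  note dims = unit_dims[OF U]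
  have "mat_adjoint A * A = A * A" using srep_herm[OF assms] by simp
  also have "\<dots> = U * (dmat n d * (mat_adjoint U * (U * (dmat n d * mat_adjoint U))))"
    unfolding A using dims by (simp add: assoc_dim)
  also have "\<dots> = U * (dmat n d * dmat n d * mat_adjoint U)"
    using unit_cancel_l[OF U, of "dmat n d * mat_adjoint U"] dims by (simp add: assoc_dim)
  also have "\<dots> = U * dmat n (\<lambda>i. (d i)^2) * mat_adjoint U"
    unfolding dmat_mult using dims by (simp add: assoc_dim power2_eq_square)
  finally show ?thesis using U unfolding srep_def by simp
qed

lemma trace_comm: assumes A: "(A::cmat) \<in> carrier_mat n m" and B: "B \<in> carrier_mat m n"
  shows "trace (A * B) = trace (B * A)"
proof -
  have "trace (A * B) = (\<Sum>i<n. \<Sum>l<m. A$$(i,l) * B$$(l,i))"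
    unfolding trace_def using A B by (auto simp: row_col_sum intro!: sum.cong)
  also have "\<dots> = (\<Sum>l<m. \<Sum>i<n. B$$(l,i) * A$$(i,l))"
    by (subst sum.swap, simp add: mult.commute)
  also have "\<dots> = trace (B * A)"
    unfolding trace_def using A B by (auto simp: row_col_sum intro!: sum.cong)
  finally show ?thesis .
qed

lemma trace_dmat: "trace (dmat n d) = (\<Sum>i<n. complex_of_real (d i))"
  unfolding trace_def dmat_def by auto

lemma trace_unit: assumes U: "unitary n U" and X: "X \<in> carrier_mat n n"
  shows "trace (U * X * mat_adjoint U) = trace X"
proof -
  have Uc: "U \<in> carrier_mat n n" using unitary_carrier[OF U] .
  have "trace (U * X * mat_adjoint U) = trace (mat_adjoint U * (U * X))"
    by (rule trace_comm[of _ n n], insert Uc X, auto)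
  thus ?thesis using unit_cancel_l[OF U, of X] X by auto
qed

lemma srep_trace: "srep n A U d \<Longrightarrow> trace A = (\<Sum>i<n. complex_of_real (d i))"
  unfolding srep_def using trace_unit[of n U "dmat n d"] trace_dmat[of n d] by simp

lemma proots_lin_prod: "proots (\<Prod>a\<leftarrow>as. [:- a, 1:]) = mset (as :: complex list)"
proof (induction as)
  case (Cons a as)
  have nz: "(\<Prod>a\<leftarrow>as. [:- a, 1:]) \<noteq> (0 :: complex poly)"
  proof -
    have "0 \<notin> set (map (\<lambda>a. [:- a, 1::complex:]) as)" by auto
    thus ?thesis using prod_list_zero_iff[of "map (\<lambda>a. [:- a, 1::complex:]) as"] by simp
  qed
  have "proots (\<Prod>a\<leftarrow>a # as. [:- a, 1:]) = proots [:- a, 1:] + proots (\<Prod>a\<leftarrow>as. [:- a, 1:])"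
    using proots_mult[of "[:- a, 1:]" "\<Prod>a\<leftarrow>as. [:- a, 1:]"] nz by simp
  thus ?case using Cons by simp
qed simp

lemma srep_eig: assumes "srep n A U d"
  shows "eigvals_mset A = mset (map (\<lambda>i. complex_of_real (d i)) [0..<n])"
proof -
  have U: "unitary n U" and A: "A = U * dmat n d * mat_adjoint U" using assms unfolding srep_def by auto
  have Uc: "U \<in> carrier_mat n n" using unitary_carrier[OF U] .
  have "similar_mat_wit A (dmat n d) U (mat_adjoint U)"
    unfolding similar_mat_wit_def Let_def using Uc unitary_left[OF U] unitary_right[OF U] A
    srep_carrier[OF assms] by auto
  hence "char_poly A = char_poly (dmat n d)" using char_poly_similar unfolding similar_mat_def by blast
  also have "\<dots> = (\<Prod>a\<leftarrow>diag_mat (dmat n d). [:- a, 1:])"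
    by (rule char_poly_upper_triangular[of _ n], auto simp: upper_triangular_def dmat_def)
  also have "diag_mat (dmat n d) = map (\<lambda>i. complex_of_real (d i)) [0..<n]"
    unfolding diag_mat_def dmat_def by auto
  finally have "char_poly A = (\<Prod>a\<leftarrow>map (\<lambda>i. complex_of_real (d i)) [0..<n]. [:- a, 1:])" .
  thus ?thesis unfolding eigvals_mset_def by (simp only: proots_lin_prod)
qed

lemma sum_mset_upt: "(\<Sum>x\<in>#mset (map f [0..<n]). g x) = (\<Sum>i<n. g (f i))"
  by (induction n, auto simp: add.commute)

lemma srep_entropy: "srep n A U d \<Longrightarrow> vn_entropy A = - (\<Sum>i<n. eta (d i))"
  unfolding vn_entropy_def by (simp only: srep_eig sum_mset_upt, simp)


lemma dmat_mult_index: assumes U: "U \<in> carrier_mat n n" and a: "a < n" and i: "i < n"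
  shows "(U * dmat n d) $$ (a,i) = U $$ (a,i) * of_real (d i)"
proof -
  have "(U * dmat n d) $$ (a,i) = (\<Sum>l<n. U $$ (a,l) * dmat n d $$ (l,i))"
    by (rule mult_index, insert U a i, auto)
  also have "\<dots> = (\<Sum>l\<in>{i}. U $$ (a,l) * dmat n d $$ (l,i))"
    by (rule sum.mono_neutral_right, insert i, auto simp: dmat_def)
  finally show ?thesis using i by (simp add: dmat_def)
qed

lemma srep_index: assumes s: "srep n A U d" and a: "a < n" and b: "b < n"
  shows "A $$ (a,b) = (\<Sum>i<n. U $$ (a,i) * of_real (d i) * cnj (U $$ (b,i)))"
proof -
  have U: "unitary n U" and A: "A = U * dmat n d * mat_adjoint U" using s unfolding srep_def by auto
  have Uc: "U \<in> carrier_mat n n" using unitary_carrier[OF U] .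
  have "A $$ (a,b) = (\<Sum>i<n. (U * dmat n d) $$ (a,i) * mat_adjoint U $$ (i,b))"
    unfolding A by (rule mult_index, insert Uc a b, auto)
  also have "\<dots> = (\<Sum>i<n. U $$ (a,i) * of_real (d i) * cnj (U $$ (b,i)))"
    by (rule sum.cong[OF refl], subst dmat_mult_index[OF Uc a], insert Uc b, auto)
  finally show ?thesis .
qed

lemma qform_index: assumes A: "A \<in> carrier_mat n n" and w: "w \<in> carrier_vec n"
  shows "qform A w = (\<Sum>a<n. \<Sum>b<n. cnj (w $ a) * A $$ (a,b) * w $ b)"
  unfolding qform_def scalar_prod_def using A w
  by (auto simp: atLeast0LessThan sum_distrib_left scalar_prod_def intro!: sum.cong simp: mult.assoc)

lemma srep_qform: assumes s: "srep n A U d" and w: "w \<in> carrier_vec n"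
  shows "qform A w = (\<Sum>i<n. of_real (d i) * of_real ((cmod (\<Sum>b<n. cnj (U $$ (b,i)) * w $ b))^2))"
proof -
  have Ac: "A \<in> carrier_mat n n" using srep_carrier[OF s] .
  have "qform A w = (\<Sum>a<n. \<Sum>b<n. cnj (w $ a) * (\<Sum>i<n. U $$ (a,i) * of_real (d i) * cnj (U $$ (b,i))) * w $ b)"
    unfolding qform_index[OF Ac w] by (intro sum.cong refl, simp add: srep_index[OF s])
  also have "\<dots> = (\<Sum>a<n. \<Sum>b<n. \<Sum>i<n. of_real (d i) * ((cnj (w $ a) * U $$ (a,i)) * (cnj (U $$ (b,i)) * w $ b)))"
    by (simp add: sum_distrib_left sum_distrib_right ac_simps)
  also have "\<dots> = (\<Sum>i<n. of_real (d i) * ((\<Sum>a<n. cnj (w $ a) * U $$ (a,i)) * (\<Sum>b<n. cnj (U $$ (b,i)) * w $ b)))"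
    apply (subst sum.swap)
    apply (subst (2) sum.swap)
    by (simp add: sum_distrib_left sum_distrib_right ac_simps sum_product)
  also have "\<dots> = (\<Sum>i<n. of_real (d i) * of_real ((cmod (\<Sum>b<n. cnj (U $$ (b,i)) * w $ b))^2))"
  proof (intro sum.cong refl)
    fix i
    define c where "c = (\<Sum>b<n. cnj (U $$ (b,i)) * w $ b)"
    have h: "(\<Sum>a<n. cnj (w $ a) * U $$ (a,i)) = cnj c"
      unfolding c_def by (simp add: mult.commute)
    have cc: "cnj c * c = of_real ((cmod c)^2)" by (metis complex_norm_square mult.commute)
    show "of_real (d i) * ((\<Sum>a<n. cnj (w $ a) * U $$ (a,i)) * (\<Sum>b<n. cnj (U $$ (b,i)) * w $ b)) =
      of_real (d i) * of_real ((cmod (\<Sum>b<n. cnj (U $$ (b,i)) * w $ b))^2)"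
      unfolding h c_def[symmetric] cc ..
  qed
  finally show ?thesis .
qed

lemma srep_psd: assumes s: "srep n A U d" and d: "\<And>i. i < n \<Longrightarrow> d i \<ge> 0"
  shows "psd n A"
proof -
  have "Im (qform A v) = 0 \<and> Re (qform A v) \<ge> 0" if v: "v \<in> carrier_vec n" for v
  proof -
    have "qform A v = of_real (\<Sum>i<n. d i * (cmod (\<Sum>b<n. cnj (U $$ (b,i)) * v $ b))^2)"
      unfolding srep_qform[OF s v] by simp
    moreover have "(\<Sum>i<n. d i * (cmod (\<Sum>b<n. cnj (U $$ (b,i)) * v $ b))^2) \<ge> 0"
      using d by (intro sum_nonneg, auto)
    ultimately show ?thesis by simp
  qed
  thus ?thesis unfolding psd_def using srep_carrier[OF s] srep_herm[OF s] by auto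
qed

lemma srep_col: assumes s: "srep n A U d" and i: "i < n"
  shows "qform A (col U i) = of_real (d i)"
proof -
  have U: "unitary n U" using s unfolding srep_def by auto
  have Uc: "U \<in> carrier_mat n n" using unitary_carrier[OF U] .
  have ci: "col U i \<in> carrier_vec n" using Uc by auto
  have orth: "(\<Sum>b<n. cnj (U $$ (b,j)) * col U i $ b) = (if j = i then 1 else 0)" if j: "j < n" for j
  proof -
    have "(\<Sum>b<n. cnj (U $$ (b,j)) * col U i $ b) = (mat_adjoint U * U) $$ (j,i)"
      by (subst mult_index[of _ n n _ n], insert Uc i j, auto intro!: sum.cong)
    thus ?thesis using unitary_left[OF U] i j by auto
  qed
  have "qform A (col U i) = (\<Sum>j<n. of_real (d j) * of_real ((cmod (if j = i then 1 else 0))^2))"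
    unfolding srep_qform[OF s ci] by (intro sum.cong refl, simp add: orth)
  also have "\<dots> = (\<Sum>j\<in>{i}. of_real (d j) * of_real ((cmod (if j = i then 1 else 0))^2))"
    by (rule sum.mono_neutral_right, insert i, auto)
  finally show ?thesis by simp
qed

lemma psd_srep_nonneg: assumes s: "srep n A U d" and p: "psd n A" and i: "i < n"
  shows "d i \<ge> 0"
proof -
  have U: "unitary n U" using s unfolding srep_def by auto
  have "col U i \<in> carrier_vec n" using unitary_carrier[OF U] by auto
  hence "Re (qform A (col U i)) \<ge> 0" using p unfolding psd_def by auto
  thus ?thesis unfolding srep_col[OF s i] by simp
qed


abbreviation sqI :: "nat \<Rightarrow> (nat \<times> nat) set" where "sqI n \<equiv> {..<n} \<times> {..<n}"

lemma trace_adj: assumes X: "(X::cmat) \<in> carrier_mat n n" and Y: "Y \<in> carrier_mat n n"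
  shows "trace (mat_adjoint X * Y) = (\<Sum>p\<in>sqI n. cnj (X $$ p) * Y $$ p)"
proof -
  have "trace (mat_adjoint X * Y) = (\<Sum>a<n. \<Sum>l<n. cnj (X $$ (l,a)) * Y $$ (l,a))"
    unfolding trace_def using X Y by (auto simp: row_col_sum intro!: sum.cong)
  also have "\<dots> = (\<Sum>l<n. \<Sum>a<n. cnj (X $$ (l,a)) * Y $$ (l,a))" by (rule sum.swap)
  also have "\<dots> = (\<Sum>p\<in>sqI n. cnj (X $$ p) * Y $$ p)" by (simp add: sum.cartesian_product)
  finally show ?thesis .
qed

definition ssq :: "nat \<Rightarrow> cmat \<Rightarrow> real" where
  "ssq n X = (\<Sum>p\<in>sqI n. (cmod (X $$ p))^2)"

lemma ssq_nonneg: "ssq n X \<ge> 0" unfolding ssq_def by (simp add: sum_nonneg)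

lemma trace_adj_self: assumes X: "(X::cmat) \<in> carrier_mat n n"
  shows "trace (mat_adjoint X * X) = of_real (ssq n X)"
  unfolding trace_adj[OF X X] ssq_def of_real_sum
  by (intro sum.cong refl, metis complex_norm_square mult.commute)

lemma hs_ssq: assumes X: "(X::cmat) \<in> carrier_mat n n"
  shows "hs_norm X = sqrt (ssq n X)"
  unfolding hs_norm_def trace_adj_self[OF X] by simp

lemma hs_nonneg: "(X::cmat) \<in> carrier_mat n n \<Longrightarrow> hs_norm X \<ge> 0" using hs_ssq ssq_nonneg by simp

lemma hs_sq: assumes X: "(X::cmat) \<in> carrier_mat n n"
  shows "(hs_norm X)^2 = ssq n X"
  unfolding hs_ssq[OF X] using ssq_nonneg by simp

lemma hs_CS: assumes X: "(X::cmat) \<in> carrier_mat n n" and Y: "Y \<in> carrier_mat n n"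
  shows "cmod (trace (mat_adjoint X * Y)) \<le> hs_norm X * hs_norm Y"
proof -
  have "cmod (trace (mat_adjoint X * Y)) \<le> (\<Sum>p\<in>sqI n. cmod (X $$ p) * cmod (Y $$ p))"
    unfolding trace_adj[OF X Y] by (rule order_trans[OF norm_sum], simp add: norm_mult)
  also have "\<dots> \<le> hs_norm X * hs_norm Y"
  proof -
    have "(\<Sum>p\<in>sqI n. cmod (X $$ p) * cmod (Y $$ p))^2 \<le> ssq n X * ssq n Y"
      unfolding ssq_def by (rule Cauchy_Schwarz_ineq_sum)
    also have "\<dots> = (hs_norm X * hs_norm Y)^2" unfolding power_mult_distrib hs_sq[OF X] hs_sq[OF Y] ..
    finally have sq: "(\<Sum>p\<in>sqI n. cmod (X $$ p) * cmod (Y $$ p))^2 \<le> (hs_norm X * hs_norm Y)^2" .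
    have "0 \<le> hs_norm X * hs_norm Y" using hs_nonneg[OF X] hs_nonneg[OF Y] by simp
    with sq show ?thesis by (rule power2_le_imp_le)
  qed
  finally show ?thesis .
qed

lemma sum_sq_le_sq_sum: "(\<forall>i<(n::nat). (x i::real) \<ge> 0) \<Longrightarrow> (\<Sum>i<n. (x i)^2) \<le> (\<Sum>i<n. x i)^2"
proof (induction n)
  case (Suc n)
  have IH: "(\<Sum>i<n. (x i)^2) \<le> (\<Sum>i<n. x i)^2" using Suc by auto
  have "0 \<le> (\<Sum>i<n. x i)" using Suc.prems by (intro sum_nonneg, auto)
  moreover have "0 \<le> x n" using Suc.prems by auto
  ultimately have "0 \<le> 2 * (\<Sum>i<n. x i) * x n" by simp
  thus ?case using IH by (simp add: power2_sum mult.commute)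
qed simp

lemma srep_trace_norm: assumes s: "srep n A U d"
  shows "trace_norm A = (\<Sum>i<n. \<bar>d i\<bar>)"
  unfolding trace_norm_def srep_eig[OF srep_sq[OF s]] sum_mset_upt by simp

lemma srep_hs: assumes s: "srep n A U d"
  shows "hs_norm A = sqrt (\<Sum>i<n. (d i)^2)"
  unfolding hs_norm_def srep_trace[OF srep_sq[OF s]] by (simp add: of_real_sum[symmetric] del: of_real_sum)

lemma hs_le_trace_norm: assumes s: "srep n A U d"
  shows "hs_norm A \<le> trace_norm A"
proof -
  have "(\<Sum>i<n. (d i)^2) \<le> (\<Sum>i<n. \<bar>d i\<bar>)^2"
    using sum_sq_le_sq_sum[of n "\<lambda>i. \<bar>d i\<bar>"] by simp
  hence "sqrt (\<Sum>i<n. (d i)^2) \<le> (\<Sum>i<n. \<bar>d i\<bar>)"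
    by (simp add: real_le_lsqrt sum_nonneg)
  thus ?thesis unfolding srep_hs[OF s] srep_trace_norm[OF s] .
qed


lemma minus_as_plus: "(A::cmat) \<in> carrier_mat n m \<Longrightarrow> B \<in> carrier_mat n m \<Longrightarrow> A - B = A + (-1) \<cdot>\<^sub>m B"
  by (rule eq_matI, auto)

lemma unitary_one: "unitary n (1\<^sub>m n)" unfolding unitary_def by auto

definition Jm :: "nat \<Rightarrow> cmat" where "Jm n = (1 / of_nat n) \<cdot>\<^sub>m 1\<^sub>m n"

lemma Jm_carrier[simp]: "Jm n \<in> carrier_mat n n" unfolding Jm_def by auto

lemma Jm_srep: "srep n (Jm n) (1\<^sub>m n) (\<lambda>_. 1 / real n)"
  unfolding srep_def using unitary_one
  by (auto intro!: eq_matI simp: Jm_def dmat_def)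

lemma Jm_density: "n > 0 \<Longrightarrow> density n (Jm n)"
  unfolding density_def using srep_psd[OF Jm_srep] srep_trace[OF Jm_srep] by auto

lemma density_srep: assumes "density n A"
  shows "\<exists>U d. srep n A U d \<and> (\<forall>i<n. d i \<ge> 0) \<and> (\<Sum>i<n. d i) = 1"
proof -
  have A: "A \<in> carrier_mat n n" and H: "mat_adjoint A = A" and p: "psd n A" and t: "trace A = 1"
    using assms unfolding density_def psd_def by auto
  from herm_srep[OF A H] obtain U d where s: "srep n A U d" by auto
  have "\<forall>i<n. d i \<ge> 0" using psd_srep_nonneg[OF s p] by auto
  moreover have "(\<Sum>i<n. d i) = 1" using srep_trace[OF s] t
    by (metis of_real_eq_1_iff of_real_sum)
  ultimately show ?thesis using s by auto
qed

lemma density_pos: "density n A \<Longrightarrow> n > 0"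
  unfolding density_def psd_def trace_def by (cases n, auto)

lemma psd_block_1: "psd_block 1 n (\<lambda>i j. A) \<longleftrightarrow> psd n A"
proof
  assume a: "psd_block 1 n (\<lambda>i j. A)"
  have "Im (qform A v) = 0 \<and> Re (qform A v) \<ge> 0" if v: "v \<in> carrier_vec n" for v
    using a[unfolded psd_block_def] v unfolding qform_def Let_def
    by (auto dest!: spec[of _ "\<lambda>_. v"])
  thus "psd n A" using a unfolding psd_block_def psd_def by auto
next
  assume a: "psd n A"
  show "psd_block 1 n (\<lambda>i j. A)"
    using a unfolding psd_block_def psd_def qform_def Let_def by auto
qed

locale chan =
  fixes N :: nat and T :: "cmat \<Rightarrow> cmat" and C :: real
  assumes ch: "channel N T" and du: "is_dual N T T" and bi: "bistochastic N T T"
    and sc: "strictly_contractive N T C"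
begin

lemma Tc: "A \<in> carrier_mat N N \<Longrightarrow> T A \<in> carrier_mat N N"
  using ch unfolding channel_def linear_map_mat_def by auto

lemma Tadd: "A \<in> carrier_mat N N \<Longrightarrow> B \<in> carrier_mat N N \<Longrightarrow> T (A + B) = T A + T B"
  using ch unfolding channel_def linear_map_mat_def by auto

lemma Tsmult: "A \<in> carrier_mat N N \<Longrightarrow> T (c \<cdot>\<^sub>m A) = c \<cdot>\<^sub>m T A"
  using ch unfolding channel_def linear_map_mat_def by auto

lemma Tminus: assumes A: "A \<in> carrier_mat N N" and B: "B \<in> carrier_mat N N" shows "T (A - B) = T A - T B"
proof -
  have "T (A - B) = T A + (-1) \<cdot>\<^sub>m T B"
    unfolding minus_as_plus[OF A B] using A B by (simp add: Tadd Tsmult)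
  also have "\<dots> = T A - T B" using Tc[OF A] Tc[OF B] minus_as_plus by metis
  finally show ?thesis .
qed

lemma T1: "T (1\<^sub>m N) = 1\<^sub>m N" using bi unfolding bistochastic_def by auto

lemma TJ: "T (Jm N) = Jm N" unfolding Jm_def using T1 by (simp add: Tsmult)

lemma Tdual: "A \<in> carrier_mat N N \<Longrightarrow> B \<in> carrier_mat N N \<Longrightarrow> trace (T A * B) = trace (A * T B)"
  using du unfolding is_dual_def by auto

lemma Ttrace: assumes A: "A \<in> carrier_mat N N" shows "trace (T A) = trace A"
proof -
  have "trace (T A * 1\<^sub>m N) = trace (A * T (1\<^sub>m N))" using Tdual[OF A] by auto
  thus ?thesis unfolding T1 using A Tc[OF A] by simp
qed

lemma Tpsd: "psd N A \<Longrightarrow> psd N (T A)"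
proof -
  assume "psd N A"
  hence "psd_block 1 N (\<lambda>i j. A)" using psd_block_1 by auto
  hence "psd_block 1 N (\<lambda>i j. T A)" using ch unfolding channel_def completely_positive_def by auto
  thus ?thesis using psd_block_1 by auto
qed

lemma Tdens: "density N A \<Longrightarrow> density N (T A)"
  unfolding density_def using Tpsd Ttrace unfolding psd_def by auto

lemma Tpow_dens: "density N A \<Longrightarrow> density N ((T ^^ k) A)"
  by (induction k, auto simp: Tdens)

lemma Ccond: "0 \<le> C" "C < 1"
  "density N s \<Longrightarrow> density N s' \<Longrightarrow> trace_norm (T s - T s') \<le> C * trace_norm (s - s')"
  using sc unfolding strictly_contractive_def by auto

end


lemma ratio_lemma:
  fixes a :: "nat \<Rightarrow> real"
  assumes nn: "\<And>k. a k \<ge> 0" and sq: "\<And>k. (a (Suc k))^2 \<le> a k * a (Suc (Suc k))"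
    and bd: "\<And>k. a k \<le> K * C^k" and C: "C \<ge> 0"
  shows "a 1 \<le> C * a 0"
proof (cases "a 0 = 0")
  case True
  have "(a 1)^2 \<le> 0" using sq[of 0] True by simp
  hence "a 1 = 0" by simp
  thus ?thesis using True by simp
next
  case False
  hence a0: "a 0 > 0" using nn[of 0] by simp
  have P: "a 0 * a (Suc k) \<ge> a 1 * a k" for k
  proof (induction k)
    case 0 thus ?case by (simp add: mult.commute)
  next
    case (Suc k)
    show ?case
    proof (cases "a (Suc k) = 0")
      case True
      thus ?thesis using nn a0 by simp
    next
      case False
      hence pos: "a (Suc k) > 0" using nn[of "Suc k"] by simp
      have "0 < (a (Suc k))^2" using pos by simp
      also have "\<dots> \<le> a k * a (Suc (Suc k))" by (rule sq)
      finally have ak: "a k > 0" using nn[of k] nn[of "Suc (Suc k)"]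
        by (metis mult_eq_0_iff order_less_le zero_less_mult_iff)
      have "a k * (a 1 * a (Suc k)) = a 1 * a k * a (Suc k)" by simp
      also have "\<dots> \<le> a 0 * a (Suc k) * a (Suc k)"
        using Suc.IH pos by (intro mult_right_mono, auto)
      also have "\<dots> = a 0 * (a (Suc k))^2" by (simp add: power2_eq_square)
      also have "\<dots> \<le> a 0 * (a k * a (Suc (Suc k)))" using sq[of k] a0 by (intro mult_left_mono, auto)
      also have "\<dots> = a k * (a 0 * a (Suc (Suc k)))" by simp
      finally show ?thesis using ak by simp
    qed
  qed
  have Q: "(a 0)^k * a k \<ge> (a 1)^k * a 0" for k
  proof (induction k)
    case 0 thus ?case by simp
  next
    case (Suc k)
    have "(a 1)^(Suc k) * a 0 = a 1 * ((a 1)^k * a 0)" by simp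
    also have "\<dots> \<le> a 1 * ((a 0)^k * a k)" using Suc.IH nn[of 1] by (intro mult_left_mono, auto)
    also have "\<dots> = (a 0)^k * (a 1 * a k)" by simp
    also have "\<dots> \<le> (a 0)^k * (a 0 * a (Suc k))" using P[of k] a0 by (intro mult_left_mono, auto)
    also have "\<dots> = (a 0)^(Suc k) * a (Suc k)" by simp
    finally show ?case .
  qed
  show ?thesis
  proof (rule ccontr)
    assume "\<not> a 1 \<le> C * a 0"
    hence lt: "C * a 0 < a 1" by simp
    show False
    proof (cases "C = 0")
      case True
      thus False using bd[of 1] lt by simp
    next
      case False
      hence Cp: "C > 0" using C by simp
      define q where "q = a 1 / (C * a 0)"
      have q1: "q > 1" unfolding q_def using lt Cp a0 by simp
      obtain k where k: "K / a 0 < q^k" using real_arch_pow[OF q1] by blast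
      have "(a 1)^k * a 0 \<le> (a 0)^k * (K * C^k)"
        using Q[of k] bd[of k] a0 by (meson order_trans mult_left_mono zero_le_power less_imp_le)
      hence "(a 1)^k * a 0 / ((C * a 0)^k * a 0) \<le> (a 0)^k * (K * C^k) / ((C * a 0)^k * a 0)"
        using Cp a0 by (intro divide_right_mono, auto)
      also have "(a 1)^k * a 0 / ((C * a 0)^k * a 0) = q^k" unfolding q_def using a0
        by (simp add: power_divide)
      also have "(a 0)^k * (K * C^k) / ((C * a 0)^k * a 0) = K / a 0" using a0 Cp
        by (simp add: power_mult_distrib)
      finally show False using k by simp
    qed
  qed
qed


lemma hs_sq_trace: assumes X: "(X::cmat) \<in> carrier_mat n n"
  shows "(hs_norm X)^2 = Re (trace (mat_adjoint X * X))"
  unfolding hs_sq[OF X] trace_adj_self[OF X] by simp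

lemma density_herm: "density n A \<Longrightarrow> mat_adjoint A = A" unfolding density_def psd_def by auto
lemma density_carrier: "density n A \<Longrightarrow> A \<in> carrier_mat n n" unfolding density_def psd_def by auto

lemma Jm_herm: "mat_adjoint (Jm n) = Jm n" unfolding Jm_def adj_smult by simp

context chan begin

lemma contraction: assumes s: "density N s"
  shows "hs_norm (T s - Jm N) \<le> C * hs_norm (s - Jm N)"
proof -
  have Np: "N > 0" using density_pos[OF s] .
  define D where "D k = (T ^^ k) s - Jm N" for k
  define a where "a k = hs_norm (D k)" for k
  have dk: "density N ((T ^^ k) s)" for k using Tpow_dens[OF s] .
  have Dc: "D k \<in> carrier_mat N N" for k unfolding D_def by (rule minus_carrier_mat[OF Jm_carrier])
  have DH: "mat_adjoint (D k) = D k" for k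
    unfolding D_def using density_carrier[OF dk] density_herm[OF dk] Jm_herm
    by (simp add: adj_minus[of _ N N])
  have TD: "T (D k) = D (Suc k)" for k
    unfolding D_def using density_carrier[OF dk] by (simp add: Tminus TJ)
  have nn: "a k \<ge> 0" for k unfolding a_def using hs_nonneg[OF Dc] .
  have sq: "(a (Suc k))^2 \<le> a k * a (Suc (Suc k))" for k
  proof -
    have "(a (Suc k))^2 = Re (trace (mat_adjoint (D (Suc k)) * D (Suc k)))"
      unfolding a_def by (rule hs_sq_trace[OF Dc])
    also have "trace (mat_adjoint (D (Suc k)) * D (Suc k)) = trace (T (D k) * D (Suc k))"
      unfolding DH TD ..
    also have "\<dots> = trace (D k * T (D (Suc k)))" by (rule Tdual[OF Dc Dc])
    also have "\<dots> = trace (mat_adjoint (D k) * D (Suc (Suc k)))" unfolding DH TD ..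
    also have "Re \<dots> \<le> cmod \<dots>" by (rule complex_Re_le_cmod)
    also have "\<dots> \<le> a k * a (Suc (Suc k))" unfolding a_def by (rule hs_CS[OF Dc Dc])
    finally show ?thesis .
  qed
  have tn: "trace_norm (D (Suc k)) \<le> C * trace_norm (D k)" for k
  proof -
    have "D (Suc k) = T ((T ^^ k) s) - T (Jm N)" unfolding D_def TJ by simp
    thus ?thesis using Ccond(3)[OF dk Jm_density[OF Np]] unfolding D_def by simp
  qed
  define K where "K = trace_norm (D 0)"
  have tnk: "trace_norm (D k) \<le> K * C^k" for k
  proof (induction k)
    case 0 thus ?case unfolding K_def by simp
  next
    case (Suc k)
    have "trace_norm (D (Suc k)) \<le> C * trace_norm (D k)" by (rule tn)
    also have "\<dots> \<le> C * (K * C^k)" using Suc Ccond(1) by (intro mult_left_mono, auto)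
    finally show ?case by (simp add: ac_simps)
  qed
  have bd: "a k \<le> K * C^k" for k
  proof -
    obtain U d where sr: "srep N (D k) U d" using herm_srep[OF Dc DH] by blast
    have "a k \<le> trace_norm (D k)" unfolding a_def by (rule hs_le_trace_norm[OF sr])
    thus ?thesis using tnk[of k] by simp
  qed
  have "a 1 \<le> C * a 0" by (rule ratio_lemma[OF nn sq bd Ccond(1)])
  thus ?thesis unfolding a_def D_def by simp
qed

end


lemma key1d: fixes x y :: real assumes x: "0 < x" "x \<le> 1" and y: "0 < y" "y \<le> 1"
  shows "(x - y)^2 / 2 \<le> x * ln x - y * ln y - (ln y + 1) * (x - y)"
proof -
  define f where "f t = t * ln t - y * ln y - (ln y + 1) * (t - y) - (t - y)^2 / 2" for t
  define f' where "f' t = ln t - ln y - (t - y)" for t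
  have der: "(f has_real_derivative f' t) (at t)" if t: "t > 0" for t
    unfolding f_def f'_def using t
    by (auto intro!: derivative_eq_intros simp: power2_eq_square algebra_simps) (simp add: field_simps)
  have fy: "f y = 0" unfolding f_def by simp
  show ?thesis
  proof (cases "y \<le> x")
    case True
    have "f y \<le> f x"
    proof (rule deriv_nonneg_imp_mono[of y x f f'])
      fix t assume t: "t \<in> {y..x}"
      hence tp: "t > 0" and ty: "y \<le> t" and t1: "t \<le> 1" using y x by auto
      show "(f has_real_derivative f' t) (at t)" using der tp by simp
      have "ln (y / t) \<le> y / t - 1" using ln_le_minus_one[of "y/t"] tp y by simp
      hence "ln t - ln y \<ge> 1 - y / t" using ln_divide_pos[of y t] tp y by simp
      moreover have "1 - y / t = (t - y) / t" using tp by (simp add: field_simps)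
      moreover have "(t - y) / t \<ge> t - y"
      proof -
        have "(t - y) * 1 \<le> (t - y) * (1 / t)" using ty t1 tp by (intro mult_left_mono, auto simp: field_simps)
        thus ?thesis by simp
      qed
      ultimately show "f' t \<ge> 0" unfolding f'_def by simp
    qed (use True in auto)
    thus ?thesis using fy unfolding f_def by simp
  next
    case False
    have "f y \<le> f x"
    proof (rule deriv_nonpos_imp_antimono[of x y f f'])
      fix t assume t: "t \<in> {x..y}"
      hence tp: "t > 0" and ty: "t \<le> y" using y x by auto
      show "(f has_real_derivative f' t) (at t)" using der tp by simp
      have "ln (t / y) \<le> t / y - 1" using ln_le_minus_one[of "t/y"] tp y by simp
      hence "ln t - ln y \<le> t / y - 1" using ln_divide_pos[of t y] tp y by simp
      moreover have "t / y - 1 = (t - y) / y" using y by (simp add: field_simps)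
      moreover have "(t - y) / y \<le> t - y"
      proof -
        have "(t - y) * (1 / y) \<le> (t - y) * 1" using ty y by (intro mult_left_mono_neg, auto simp: field_simps)
        thus ?thesis by simp
      qed
      ultimately show "f' t \<le> 0" unfolding f'_def by simp
    qed (use False in auto)
    thus ?thesis using fy unfolding f_def by simp
  qed
qed

definition gfun :: "real \<Rightarrow> real" where "gfun x = eta x - x^2 / 2"

lemma gfun0: "gfun 0 = 0" unfolding gfun_def eta_def by simp

lemma tangent: assumes x: "0 \<le> x" "x \<le> 1" and y: "0 < y" "y \<le> 1"
  shows "gfun y + (ln y + 1 - y) * (x - y) \<le> gfun x"
proof (cases "x = 0")
  case True
  have "gfun y + (ln y + 1 - y) * (0 - y) = y^2 / 2 - y"
    unfolding gfun_def eta_def using y by (simp add: algebra_simps power2_eq_square)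
  also have "\<dots> \<le> 0" using y by (simp add: power2_eq_square mult_le_cancel_right1 field_simps)
  finally show ?thesis using True gfun0 by simp
next
  case False
  hence xp: "x > 0" using x by simp
  have h1: "(x - y)^2 / 2 \<le> x * ln x - y * ln y - (ln y + 1) * (x - y)" by (rule key1d[OF xp x(2) y])
  have e1: "(x - y)^2 = x*x + y*y - 2*(x*y)" by (simp add: power2_eq_square algebra_simps)
  have e2: "(ln y + 1) * (x - y) = x * ln y + x - y * ln y - y" by (simp add: algebra_simps)
  have e3: "(ln y + 1 - y) * (x - y) = x * ln y + x - y * ln y - y - x*y + y*y" by (simp add: algebra_simps)
  have gx: "gfun x = x * ln x - x*x/2" using xp by (simp add: gfun_def eta_def power2_eq_square)
  have gy: "gfun y = y * ln y - y*y/2" using y by (simp add: gfun_def eta_def power2_eq_square)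
  show ?thesis unfolding gx gy e3 using h1 e1 e2 by linarith
qed

lemma jensen_row:
  fixes m :: "nat \<Rightarrow> real" and p :: "nat \<Rightarrow> real"
  assumes p: "\<And>i. i < n \<Longrightarrow> 0 \<le> p i \<and> p i \<le> 1" and m: "\<And>i. i < n \<Longrightarrow> 0 \<le> m i"
    and m1: "(\<Sum>i<n. m i) = 1"
  shows "gfun (\<Sum>i<n. m i * p i) \<le> (\<Sum>i<n. m i * gfun (p i))"
proof -
  define q where "q = (\<Sum>i<n. m i * p i)"
  have q0: "q \<ge> 0" unfolding q_def using p m by (intro sum_nonneg, auto)
  have "q \<le> (\<Sum>i<n. m i * 1)" unfolding q_def using p m by (intro sum_mono mult_left_mono, auto)
  hence q1: "q \<le> 1" using m1 by simp
  show ?thesis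
  proof (cases "q = 0")
    case True
    have "\<forall>i\<in>{..<n}. m i * p i = 0"
      using True unfolding q_def by (subst sum_nonneg_eq_0_iff[symmetric], insert p m, auto)
    hence "\<forall>i<n. m i * gfun (p i) = 0" using gfun0 by (metis lessThan_iff mult_eq_0_iff)
    hence "(\<Sum>i<n. m i * gfun (p i)) = 0" by (auto intro!: sum.neutral)
    thus ?thesis using True gfun0 unfolding q_def by simp
  next
    case False
    hence qp: "q > 0" using q0 by simp
    define c where "c = ln q + 1 - q"
    have "(\<Sum>i<n. m i * (gfun q + c * (p i - q))) \<le> (\<Sum>i<n. m i * gfun (p i))"
      using p m tangent[OF _ _ qp q1] by (intro sum_mono mult_left_mono, auto simp: c_def)
    moreover have "(\<Sum>i<n. m i * (gfun q + c * (p i - q))) = gfun q * (\<Sum>i<n. m i) + c * ((\<Sum>i<n. m i * p i) - q * (\<Sum>i<n. m i))"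
      by (simp add: algebra_simps sum.distrib sum_distrib_left sum_subtractf)
    ultimately show ?thesis using m1 unfolding q_def by simp
  qed
qed

lemma ds_ineq:
  fixes M :: "nat \<Rightarrow> nat \<Rightarrow> real"
  assumes p: "\<And>i. i < n \<Longrightarrow> 0 \<le> p i \<and> p i \<le> 1" and M: "\<And>i j. i < n \<Longrightarrow> j < n \<Longrightarrow> 0 \<le> M j i"
    and row: "\<And>j. j < n \<Longrightarrow> (\<Sum>i<n. M j i) = 1" and col: "\<And>i. i < n \<Longrightarrow> (\<Sum>j<n. M j i) = 1"
    and q: "\<And>j. j < n \<Longrightarrow> q j = (\<Sum>i<n. M j i * p i)"
  shows "(\<Sum>j<n. gfun (q j)) \<le> (\<Sum>i<n. gfun (p i))"
proof -
  have "(\<Sum>j<n. gfun (q j)) \<le> (\<Sum>j<n. \<Sum>i<n. M j i * gfun (p i))"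
    using jensen_row[OF p M row] q by (intro sum_mono, auto)
  also have "\<dots> = (\<Sum>i<n. (\<Sum>j<n. M j i) * gfun (p i))"
    by (subst sum.swap, simp add: sum_distrib_right)
  also have "\<dots> = (\<Sum>i<n. gfun (p i))" using col by simp
  finally show ?thesis .
qed


definition outer :: "nat \<Rightarrow> complex vec \<Rightarrow> cmat" where
  "outer n w = mat n n (\<lambda>(a,b). w $ a * cnj (w $ b))"

lemma outer_carrier[simp]: "outer n w \<in> carrier_mat n n" unfolding outer_def by auto
lemma outer_dim[simp]: "dim_row (outer n w) = n" "dim_col (outer n w) = n" unfolding outer_def by auto
lemma outer_index[simp]: "a < n \<Longrightarrow> b < n \<Longrightarrow> outer n w $$ (a,b) = w $ a * cnj (w $ b)"
  unfolding outer_def by auto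

lemma qform_trace: assumes A: "A \<in> carrier_mat n n" and w: "w \<in> carrier_vec n"
  shows "qform A w = trace (A * outer n w)"
proof -
  have "trace (A * outer n w) = (\<Sum>a<n. \<Sum>l<n. A $$ (a,l) * (w $ l * cnj (w $ a)))"
    unfolding trace_def using A by (auto simp: row_col_sum intro!: sum.cong)
  also have "\<dots> = (\<Sum>a<n. \<Sum>b<n. cnj (w $ a) * A $$ (a,b) * w $ b)"
    by (simp add: ac_simps)
  finally show ?thesis unfolding qform_index[OF A w] by simp
qed

lemma outer_psd: assumes w: "w \<in> carrier_vec n" shows "psd n (outer n w)"
proof -
  have H: "mat_adjoint (outer n w) = outer n w" by (rule eq_matI, auto simp: outer_def)
  have "Im (qform (outer n w) x) = 0 \<and> Re (qform (outer n w) x) \<ge> 0" if x: "x \<in> carrier_vec n" for x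
  proof -
    define c where "c = (\<Sum>a<n. cnj (x $ a) * w $ a)"
    have "qform (outer n w) x = (\<Sum>a<n. \<Sum>b<n. cnj (x $ a) * (w $ a * cnj (w $ b)) * x $ b)"
      unfolding qform_index[OF outer_carrier x] by simp
    also have "\<dots> = (\<Sum>a<n. \<Sum>b<n. (cnj (x $ a) * w $ a) * cnj (cnj (x $ b) * w $ b))"
      by (simp add: ac_simps)
    also have "\<dots> = c * cnj c" unfolding c_def by (simp add: sum_product)
    also have "\<dots> = of_real ((cmod c)^2)" by (rule complex_norm_square[symmetric])
    finally show ?thesis by simp
  qed
  thus ?thesis unfolding psd_def using H by auto
qed

lemma trace_outer_col: assumes U: "unitary n U" and j: "j < n"
  shows "trace (outer n (col U j)) = 1"
proof -
  have Uc: "U \<in> carrier_mat n n" using unitary_carrier[OF U] .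
  have "trace (outer n (col U j)) = (\<Sum>a<n. cnj (U $$ (a,j)) * U $$ (a,j))"
    unfolding trace_def outer_def using Uc j by (auto intro!: sum.cong)
  also have "\<dots> = (mat_adjoint U * U) $$ (j,j)"
    by (subst mult_index[of _ n n _ n], insert Uc j, auto intro!: sum.cong)
  finally show ?thesis using unitary_left[OF U] j by simp
qed

lemma srep_trace_mult: assumes s: "srep n A W d" and Y: "Y \<in> carrier_mat n n"
  shows "trace (A * Y) = (\<Sum>i<n. of_real (d i) * qform Y (col W i))"
proof -
  have W: "unitary n W" using s unfolding srep_def by auto
  have Wc: "W \<in> carrier_mat n n" using unitary_carrier[OF W] .
  have Ac: "A \<in> carrier_mat n n" using srep_carrier[OF s] .
  have "trace (A * Y) = (\<Sum>a<n. \<Sum>b<n. A $$ (a,b) * Y $$ (b,a))"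
    unfolding trace_def using Ac Y by (auto simp: row_col_sum intro!: sum.cong)
  also have "\<dots> = (\<Sum>a<n. \<Sum>b<n. \<Sum>i<n. of_real (d i) * (cnj (W $$ (b,i)) * Y $$ (b,a) * W $$ (a,i)))"
    by (intro sum.cong refl, simp add: srep_index[OF s] sum_distrib_right sum_distrib_left ac_simps)
  also have "\<dots> = (\<Sum>a<n. \<Sum>i<n. \<Sum>b<n. of_real (d i) * (cnj (W $$ (b,i)) * Y $$ (b,a) * W $$ (a,i)))"
    by (rule sum.cong[OF refl], rule sum.swap)
  also have "\<dots> = (\<Sum>i<n. \<Sum>a<n. \<Sum>b<n. of_real (d i) * (cnj (W $$ (b,i)) * Y $$ (b,a) * W $$ (a,i)))"
    by (rule sum.swap)
  also have "\<dots> = (\<Sum>i<n. \<Sum>b<n. \<Sum>a<n. of_real (d i) * (cnj (W $$ (b,i)) * Y $$ (b,a) * W $$ (a,i)))"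
    by (rule sum.cong[OF refl], rule sum.swap)
  also have "\<dots> = (\<Sum>i<n. of_real (d i) * (\<Sum>b<n. \<Sum>a<n. cnj (W $$ (b,i)) * Y $$ (b,a) * W $$ (a,i)))"
    by (simp add: sum_distrib_left)
  also have "\<dots> = (\<Sum>i<n. of_real (d i) * qform Y (col W i))"
    by (intro sum.cong refl, subst qform_index[OF Y], insert Wc, auto intro!: sum.cong)
  finally show ?thesis .
qed

lemma unit_qform_sum: assumes W: "unitary n W" and Y: "Y \<in> carrier_mat n n"
  shows "(\<Sum>i<n. qform Y (col W i)) = trace Y"
proof -
  have Wc: "W \<in> carrier_mat n n" using unitary_carrier[OF W] .
  have d1: "dmat n (\<lambda>_. 1) = 1\<^sub>m n" by (rule eq_matI, auto simp: dmat_def)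
  have "srep n (1\<^sub>m n) W (\<lambda>_. 1)" unfolding srep_def d1 using W Wc unitary_right[OF W] by simp
  from srep_trace_mult[OF this Y] show ?thesis using Y by simp
qed

lemma ssq_shift: assumes X: "X \<in> carrier_mat n n" and t: "trace X = 1" and n: "n > 0"
  shows "ssq n X = ssq n (X - Jm n) + 1 / real n"
proof -
  have nest: "ssq n Z = (\<Sum>a<n. \<Sum>b<n. (cmod (Z $$ (a,b)))^2)" for Z
    unfolding ssq_def by (simp add: sum.cartesian_product)
  define c where "c = 1 / real n"
  have cm: "(cmod (z - 1 / of_nat n))^2 = (cmod z)^2 - (2 * c * Re z - c^2)" for z
    unfolding cmod_power2 c_def by (simp add: power2_eq_square algebra_simps Re_divide)
  have "ssq n (X - Jm n) = (\<Sum>a<n. \<Sum>b<n. (cmod (X $$ (a,b)))^2 - (if a = b then 2 * c * Re (X $$ (a,a)) - c^2 else 0))"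
    unfolding nest using X
    by (intro sum.cong refl, auto simp: Jm_def cm)
  also have "\<dots> = (\<Sum>a<n. (\<Sum>b<n. (cmod (X $$ (a,b)))^2) - (2 * c * Re (X $$ (a,a)) - c^2))"
    by (intro sum.cong refl, simp add: sum_subtractf)
  also have "\<dots> = ssq n X - 2 * c * (\<Sum>a<n. Re (X $$ (a,a))) + real n * c^2"
    unfolding nest by (simp add: sum_subtractf sum_distrib_left)
  also have "(\<Sum>a<n. Re (X $$ (a,a))) = 1" using t unfolding trace_def using X by (simp add: Re_sum[symmetric])
  finally show ?thesis unfolding c_def using n by (simp add: power2_eq_square)
qed


lemma psd_qform_real: "psd n A \<Longrightarrow> w \<in> carrier_vec n \<Longrightarrow> qform A w = of_real (Re (qform A w)) \<and> Re (qform A w) \<ge> 0"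
  unfolding psd_def by (auto simp: complex_eq_iff)

lemma srep_hs_sq: assumes s: "srep n A U d" shows "(hs_norm A)^2 = (\<Sum>i<n. (d i)^2)"
  unfolding srep_hs[OF s] by (simp add: sum_nonneg)

context chan begin

lemma entropy_ineq: assumes s: "density N s"
  shows "vn_entropy (T s) - vn_entropy s \<ge> (1 - C^2) / 2 * (hs_norm (s - Jm N))^2"
proof -
  have Np: "N > 0" using density_pos[OF s] .
  obtain U p where sU: "srep N s U p" and p0: "\<forall>i<N. p i \<ge> 0" and p1: "(\<Sum>i<N. p i) = 1"
    using density_srep[OF s] by blast
  have ts: "density N (T s)" using Tdens[OF s] .
  obtain V q where sV: "srep N (T s) V q" and q0: "\<forall>i<N. q i \<ge> 0" and q1: "(\<Sum>i<N. q i) = 1"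
    using density_srep[OF ts] by blast
  have U: "unitary N U" and V: "unitary N V" using sU sV unfolding srep_def by auto
  have Uc: "U \<in> carrier_mat N N" and Vc: "V \<in> carrier_mat N N" using U V unitary_carrier by auto
  have sc: "s \<in> carrier_mat N N" using density_carrier[OF s] .
  have cU: "col U i \<in> carrier_vec N" for i using Uc by auto
  have cV: "col V j \<in> carrier_vec N" for j using Vc by auto
  define M where "M j i = Re (qform (T (outer N (col V j))) (col U i))" for j i
  have Tpo: "psd N (T (outer N w))" if "w \<in> carrier_vec N" for w using Tpsd[OF outer_psd[OF that]] .
  have Mre: "qform (T (outer N (col V j))) (col U i) = of_real (M j i)" for i j
    unfolding M_def using psd_qform_real[OF Tpo[OF cV] cU] by simp
  have M0: "M j i \<ge> 0" for i j
    unfolding M_def using psd_qform_real[OF Tpo[OF cV] cU] by simp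
  have p01: "0 \<le> p i \<and> p i \<le> 1" if i: "i < N" for i
  proof -
    have "p i \<le> (\<Sum>i<N. p i)" using p0 i by (intro member_le_sum, auto)
    thus ?thesis using p0 i p1 by auto
  qed
  have qeq: "q j = (\<Sum>i<N. M j i * p i)" if j: "j < N" for j
  proof -
    have "complex_of_real (q j) = qform (T s) (col V j)" using srep_col[OF sV j] by simp
    also have "\<dots> = trace (T s * outer N (col V j))" by (rule qform_trace[OF Tc[OF sc] cV])
    also have "\<dots> = trace (s * T (outer N (col V j)))" by (rule Tdual[OF sc outer_carrier])
    also have "\<dots> = (\<Sum>i<N. of_real (p i) * qform (T (outer N (col V j))) (col U i))"
      by (rule srep_trace_mult[OF sU Tc[OF outer_carrier]])
    also have "\<dots> = complex_of_real (\<Sum>i<N. M j i * p i)" unfolding Mre by (simp add: mult.commute)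
    finally show ?thesis by (simp only: of_real_eq_iff)
  qed
  have row: "(\<Sum>i<N. M j i) = 1" if j: "j < N" for j
  proof -
    have "complex_of_real (\<Sum>i<N. M j i) = (\<Sum>i<N. qform (T (outer N (col V j))) (col U i))"
      unfolding Mre by simp
    also have "\<dots> = trace (T (outer N (col V j)))" by (rule unit_qform_sum[OF U Tc[OF outer_carrier]])
    also have "\<dots> = 1" using Ttrace[OF outer_carrier] trace_outer_col[OF V j] by simp
    finally show ?thesis by (simp only: of_real_eq_1_iff)
  qed
  have col: "(\<Sum>j<N. M j i) = 1" if i: "i < N" for i
  proof -
    have sw: "qform (T (outer N (col V j))) (col U i) = qform (T (outer N (col U i))) (col V j)" for j
    proof -
      have "qform (T (outer N (col V j))) (col U i) = trace (T (outer N (col V j)) * outer N (col U i))"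
        by (rule qform_trace[OF Tc[OF outer_carrier] cU])
      also have "\<dots> = trace (outer N (col V j) * T (outer N (col U i)))" by (rule Tdual[OF outer_carrier outer_carrier])
      also have "\<dots> = trace (T (outer N (col U i)) * outer N (col V j))"
        by (rule trace_comm[OF outer_carrier Tc[OF outer_carrier]])
      also have "\<dots> = qform (T (outer N (col U i))) (col V j)"
        by (rule qform_trace[OF Tc[OF outer_carrier] cV, symmetric])
      finally show ?thesis .
    qed
    have "complex_of_real (\<Sum>j<N. M j i) = (\<Sum>j<N. qform (T (outer N (col U i))) (col V j))"
      unfolding sw[symmetric] Mre by simp
    also have "\<dots> = trace (T (outer N (col U i)))" by (rule unit_qform_sum[OF V Tc[OF outer_carrier]])
    also have "\<dots> = 1" using Ttrace[OF outer_carrier] trace_outer_col[OF U i] by simp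
    finally show ?thesis by (simp only: of_real_eq_1_iff)
  qed
  have ds: "(\<Sum>j<N. gfun (q j)) \<le> (\<Sum>i<N. gfun (p i))"
    by (rule ds_ineq[of N p M q], insert p01 M0 row col qeq, auto)
  have ent: "vn_entropy (T s) - vn_entropy s = (\<Sum>i<N. eta (p i)) - (\<Sum>j<N. eta (q j))"
    unfolding srep_entropy[OF sU] srep_entropy[OF sV] by simp
  have hp: "(hs_norm s)^2 = (\<Sum>i<N. (p i)^2)" by (rule srep_hs_sq[OF sU])
  have hq: "(hs_norm (T s))^2 = (\<Sum>j<N. (q j)^2)" by (rule srep_hs_sq[OF sV])
  have g_expand: "(\<Sum>i<N. gfun (x i)) = (\<Sum>i<N. eta (x i)) - (\<Sum>i<N. (x i)^2) / 2" for x
    unfolding gfun_def by (simp add: sum_subtractf sum_divide_distrib)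
  have main: "vn_entropy (T s) - vn_entropy s \<ge> ((hs_norm s)^2 - (hs_norm (T s))^2) / 2"
    using ds unfolding ent hp hq g_expand by simp
  have sh1: "(hs_norm s)^2 = (hs_norm (s - Jm N))^2 + 1 / real N"
    unfolding hs_sq[OF sc] hs_sq[OF minus_carrier_mat[OF Jm_carrier]]
    using ssq_shift[OF sc _ Np] s unfolding density_def by simp
  have tsc: "T s \<in> carrier_mat N N" using Tc[OF sc] .
  have sh2: "(hs_norm (T s))^2 = (hs_norm (T s - Jm N))^2 + 1 / real N"
    unfolding hs_sq[OF tsc] hs_sq[OF minus_carrier_mat[OF Jm_carrier]]
    using ssq_shift[OF tsc _ Np] ts unfolding density_def by simp
  have con: "hs_norm (T s - Jm N) \<le> C * hs_norm (s - Jm N)" by (rule contraction[OF s])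
  have nn: "0 \<le> hs_norm (T s - Jm N)" by (rule hs_nonneg[OF minus_carrier_mat[OF Jm_carrier]])
  have "(hs_norm (T s - Jm N))^2 \<le> (C * hs_norm (s - Jm N))^2"
    using con nn by (intro power_mono, auto)
  hence cc: "(hs_norm (T s - Jm N))^2 \<le> C^2 * (hs_norm (s - Jm N))^2" by (simp add: power_mult_distrib)
  have eq: "(1 - C^2) / 2 * (hs_norm (s - Jm N))^2 = ((hs_norm (s - Jm N))^2 - C^2 * (hs_norm (s - Jm N))^2) / 2"
    by (simp add: algebra_simps)
  have "((hs_norm (s - Jm N))^2 - C^2 * (hs_norm (s - Jm N))^2) / 2 \<le> ((hs_norm (s - Jm N))^2 - (hs_norm (T s - Jm N))^2) / 2"
    using cc by simp
  also have "\<dots> = ((hs_norm s)^2 - (hs_norm (T s))^2) / 2" unfolding sh1 sh2 by simp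
  also have "\<dots> \<le> vn_entropy (T s) - vn_entropy s" by (rule main)
  finally show ?thesis unfolding eq .
qed

end


lemma trace_smult: "(A::cmat) \<in> carrier_mat n n \<Longrightarrow> trace (c \<cdot>\<^sub>m A) = c * trace A"
  unfolding trace_def by (auto simp: sum_distrib_left)

lemma trace_add: "(A::cmat) \<in> carrier_mat n n \<Longrightarrow> B \<in> carrier_mat n n \<Longrightarrow> trace (A + B) = trace A + trace B"
  unfolding trace_def by (auto simp: sum.distrib)

lemma trace_minus: "(A::cmat) \<in> carrier_mat n n \<Longrightarrow> B \<in> carrier_mat n n \<Longrightarrow> trace (A - B) = trace A - trace B"
  unfolding trace_def by (auto simp: sum_subtractf)

lemma trace_adjoint: "(A::cmat) \<in> carrier_mat n n \<Longrightarrow> trace (mat_adjoint A) = cnj (trace A)"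
  unfolding trace_def by auto

lemma ssq_smult: assumes A: "(A::cmat) \<in> carrier_mat n n" shows "ssq n (c \<cdot>\<^sub>m A) = (cmod c)^2 * ssq n A"
  unfolding ssq_def sum_distrib_left using A
  by (intro sum.cong refl, auto simp: norm_mult power_mult_distrib)

lemma hs_smult: assumes A: "(A::cmat) \<in> carrier_mat n n" shows "hs_norm (c \<cdot>\<^sub>m A) = cmod c * hs_norm A"
proof -
  have cA: "c \<cdot>\<^sub>m A \<in> carrier_mat n n" using A by auto
  show ?thesis unfolding hs_ssq[OF cA] hs_ssq[OF A] ssq_smult[OF A] by (simp add: real_sqrt_mult)
qed

lemma ssq_zero: assumes A: "(A::cmat) \<in> carrier_mat n n" and z: "ssq n A = 0" shows "A = 0\<^sub>m n n"
proof -
  have "\<forall>p\<in>sqI n. (cmod (A $$ p))^2 = 0"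
    using z unfolding ssq_def by (subst sum_nonneg_eq_0_iff[symmetric], auto)
  thus ?thesis using A by (intro eq_matI, auto)
qed

lemma ssq_herm_sum: assumes A: "(A::cmat) \<in> carrier_mat n n" and B: "B \<in> carrier_mat n n"
  and HA: "mat_adjoint A = A" and HB: "mat_adjoint B = B"
  shows "ssq n (A + \<i> \<cdot>\<^sub>m B) = ssq n A + ssq n B"
proof -
  have cm: "(cmod (a + \<i> * b))^2 = (cmod a)^2 + (cmod b)^2 + 2 * Re (\<i> * (cnj a * b))" for a b
    unfolding cmod_power2 by (simp add: power2_eq_square algebra_simps)
  have tr: "trace (mat_adjoint A * B) = (\<Sum>p\<in>sqI n. cnj (A $$ p) * B $$ p)" by (rule trace_adj[OF A B])
  have real: "Im (trace (A * B)) = 0"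
  proof -
    have "cnj (trace (A * B)) = trace (mat_adjoint (A * B))" using A B trace_adjoint[of "A * B" n] by simp
    also have "\<dots> = trace (B * A)" using adj_mult[OF A B] HA HB by simp
    also have "\<dots> = trace (A * B)" by (rule trace_comm[OF B A])
    finally show ?thesis by (metis Reals_cnj_iff complex_is_Real_iff)
  qed
  have "ssq n (A + \<i> \<cdot>\<^sub>m B) = (\<Sum>p\<in>sqI n. (cmod (A $$ p))^2 + (cmod (B $$ p))^2 + 2 * Re (\<i> * (cnj (A $$ p) * B $$ p)))"
    unfolding ssq_def using A B by (intro sum.cong refl, auto simp: cm)
  also have "\<dots> = ssq n A + ssq n B + 2 * Re (\<i> * trace (mat_adjoint A * B))"
    unfolding tr ssq_def by (simp add: sum.distrib sum_distrib_left Re_sum)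
  also have "Re (\<i> * trace (mat_adjoint A * B)) = 0" using real HA by simp
  finally show ?thesis by simp
qed

lemma smult_cancel: assumes c: "c \<noteq> 0" and A: "(A::cmat) \<in> carrier_mat n m" and B: "B \<in> carrier_mat n m"
  and eq: "c \<cdot>\<^sub>m A = c \<cdot>\<^sub>m B" shows "A = B"
proof (rule eq_matI)
  fix i j assume "i < dim_row B" "j < dim_col B"
  hence i: "i < n" and j: "j < m" using B by auto
  have "(c \<cdot>\<^sub>m A) $$ (i,j) = (c \<cdot>\<^sub>m B) $$ (i,j)" using eq by simp
  thus "A $$ (i,j) = B $$ (i,j)" using i j A B c by auto
qed (insert A B, auto)

lemma udu_index: assumes U: "U \<in> carrier_mat n n" and a: "a < n" and b: "b < n"
  shows "(U * dmat n d * mat_adjoint U) $$ (a,b) = (\<Sum>i<n. U $$ (a,i) * of_real (d i) * cnj (U $$ (b,i)))"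
proof -
  have "(U * dmat n d * mat_adjoint U) $$ (a,b) = (\<Sum>i<n. (U * dmat n d) $$ (a,i) * mat_adjoint U $$ (i,b))"
    by (rule mult_index, insert U a b, auto)
  also have "\<dots> = (\<Sum>i<n. U $$ (a,i) * of_real (d i) * cnj (U $$ (b,i)))"
    by (rule sum.cong[OF refl], subst dmat_mult_index[OF U a], insert U b, auto)
  finally show ?thesis .
qed

lemma srep_affine: assumes s: "srep n A U d"
  shows "srep n (of_real x \<cdot>\<^sub>m 1\<^sub>m n + of_real y \<cdot>\<^sub>m A) U (\<lambda>i. x + y * d i)"
proof -
  have U: "unitary n U" using s unfolding srep_def by auto
  have Uc: "U \<in> carrier_mat n n" using unitary_carrier[OF U] .
  have Ac: "A \<in> carrier_mat n n" using srep_carrier[OF s] .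
  have "of_real x \<cdot>\<^sub>m 1\<^sub>m n + of_real y \<cdot>\<^sub>m A = U * dmat n (\<lambda>i. x + y * d i) * mat_adjoint U"
  proof (rule eq_matI)
    fix a b assume "a < dim_row (U * dmat n (\<lambda>i. x + y * d i) * mat_adjoint U)"
      "b < dim_col (U * dmat n (\<lambda>i. x + y * d i) * mat_adjoint U)"
    hence a: "a < n" and b: "b < n" using Uc by auto
    have uu: "(\<Sum>i<n. U $$ (a,i) * cnj (U $$ (b,i))) = (if a = b then 1 else 0)"
    proof -
      have "(\<Sum>i<n. U $$ (a,i) * cnj (U $$ (b,i))) = (U * mat_adjoint U) $$ (a,b)"
        by (subst mult_index[of _ n n _ n], insert Uc a b, auto intro!: sum.cong)
      thus ?thesis using unitary_right[OF U] a b by auto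
    qed
    have "(U * dmat n (\<lambda>i. x + y * d i) * mat_adjoint U) $$ (a,b) =
       of_real x * (\<Sum>i<n. U $$ (a,i) * cnj (U $$ (b,i))) + of_real y * (\<Sum>i<n. U $$ (a,i) * of_real (d i) * cnj (U $$ (b,i)))"
      unfolding udu_index[OF Uc a b] by (simp add: sum_distrib_left sum.distrib algebra_simps)
    also have "\<dots> = (of_real x \<cdot>\<^sub>m 1\<^sub>m n + of_real y \<cdot>\<^sub>m A) $$ (a,b)"
      unfolding uu srep_index[OF s a b, symmetric] using a b Ac by auto
    finally show "(of_real x \<cdot>\<^sub>m 1\<^sub>m n + of_real y \<cdot>\<^sub>m A) $$ (a,b) = (U * dmat n (\<lambda>i. x + y * d i) * mat_adjoint U) $$ (a,b)" by simp
  qed (insert Uc Ac, auto)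
  thus ?thesis using U unfolding srep_def by simp
qed

context chan begin

lemma herm_density: assumes Y: "Y \<in> carrier_mat N N" and H: "mat_adjoint Y = Y" and t: "trace Y = 0" and Np: "N > 0"
  shows "\<exists>e>0. density N (Jm N + of_real e \<cdot>\<^sub>m Y)"
proof -
  obtain U d where s: "srep N Y U d" using herm_srep[OF Y H] by blast
  define S where "S = (\<Sum>i<N. \<bar>d i\<bar>)"
  have S0: "S \<ge> 0" unfolding S_def by (simp add: sum_nonneg)
  define e where "e = 1 / (real N * (1 + S))"
  have e0: "e > 0" unfolding e_def using Np S0 by simp
  have sr: "srep N (of_real (1 / real N) \<cdot>\<^sub>m 1\<^sub>m N + of_real e \<cdot>\<^sub>m Y) U (\<lambda>i. 1 / real N + e * d i)"
    by (rule srep_affine[OF s])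
  have JJ: "of_real (1 / real N) \<cdot>\<^sub>m 1\<^sub>m N = Jm N" unfolding Jm_def by simp
  have nonneg: "1 / real N + e * d i \<ge> 0" if i: "i < N" for i
  proof -
    have "\<bar>d i\<bar> \<le> S" unfolding S_def using i by (intro member_le_sum, auto)
    hence "e * \<bar>d i\<bar> \<le> e * S" using e0 by (intro mult_left_mono, auto)
    also have "e * S \<le> 1 / real N"
    proof -
      have "e * S = S / (real N * (1 + S))" unfolding e_def by simp
      also have "\<dots> \<le> (1 + S) / (real N * (1 + S))" by (rule divide_right_mono) (use S0 Np in auto)
      also have "(1 + S) / (real N * (1 + S)) = 1 / real N" using S0 by simp
      finally show ?thesis .
    qed
    finally have "e * \<bar>d i\<bar> \<le> 1 / real N" .
    moreover have "- (e * \<bar>d i\<bar>) \<le> e * d i" using e0 by (simp add: abs_if)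
    ultimately show ?thesis by linarith
  qed
  have "psd N (Jm N + of_real e \<cdot>\<^sub>m Y)" using srep_psd[OF sr nonneg] unfolding JJ by simp
  moreover have "trace (Jm N + of_real e \<cdot>\<^sub>m Y) = 1"
    using Y t Np by (simp add: trace_add[of _ N] trace_smult Jm_def trace_def sum_distrib_left[symmetric])
  ultimately show ?thesis using e0 unfolding density_def by blast
qed

lemma herm_T: assumes Y: "Y \<in> carrier_mat N N" and H: "mat_adjoint Y = Y" and t: "trace Y = 0" and Np: "N > 0"
  shows "mat_adjoint (T Y) = T Y \<and> hs_norm (T Y) \<le> C * hs_norm Y"
proof -
  obtain e where e0: "e > 0" and d: "density N (Jm N + of_real e \<cdot>\<^sub>m Y)" using herm_density[OF assms] by blast
  define r where "r = Jm N + of_real e \<cdot>\<^sub>m Y"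
  have rc: "r \<in> carrier_mat N N" unfolding r_def using Y by auto
  have eY: "r - Jm N = of_real e \<cdot>\<^sub>m Y" unfolding r_def using Y by (intro eq_matI, auto simp: Jm_def)
  have TeY: "T r - Jm N = of_real e \<cdot>\<^sub>m T Y"
  proof -
    have "T r - Jm N = T r - T (Jm N)" unfolding TJ ..
    also have "\<dots> = T (r - Jm N)" using Tminus[OF rc Jm_carrier] by simp
    finally show ?thesis unfolding eY using Tsmult[OF Y] by simp
  qed
  have TYc: "T Y \<in> carrier_mat N N" using Tc[OF Y] .
  have "mat_adjoint (T r - Jm N) = T r - Jm N"
    using density_herm[OF Tdens[OF d[folded r_def]]] Jm_herm Tc[OF rc]
    by (simp add: adj_minus[of _ N N])
  hence eqm: "of_real e \<cdot>\<^sub>m mat_adjoint (T Y) = of_real e \<cdot>\<^sub>m T Y" unfolding TeY adj_smult by simp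
  have h1: "mat_adjoint (T Y) = T Y"
  proof (rule smult_cancel[of "of_real e" _ N N])
    show "complex_of_real e \<noteq> 0" using e0 by simp
    show "mat_adjoint (T Y) \<in> carrier_mat N N" using TYc by simp
    show "T Y \<in> carrier_mat N N" by (rule TYc)
    show "of_real e \<cdot>\<^sub>m mat_adjoint (T Y) = of_real e \<cdot>\<^sub>m T Y" by (rule eqm)
  qed
  have "hs_norm (T r - Jm N) \<le> C * hs_norm (r - Jm N)" by (rule contraction[OF d[folded r_def]])
  hence "e * hs_norm (T Y) \<le> C * (e * hs_norm Y)" unfolding TeY eY hs_smult[OF TYc] hs_smult[OF Y] using e0 by simp
  hence "hs_norm (T Y) \<le> C * hs_norm Y" using e0 by (simp add: algebra_simps)
  thus ?thesis using h1 by simp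
qed

end


context chan begin

lemma eig_bound: assumes ev: "map_eigenvalue N T z" and z1: "z \<noteq> 1"
  shows "cmod z \<le> C"
proof -
  obtain X where X: "X \<in> carrier_mat N N" and X0: "X \<noteq> 0\<^sub>m N N" and TX: "T X = z \<cdot>\<^sub>m X"
    using ev unfolding map_eigenvalue_def by blast
  have Np: "N > 0"
  proof (rule ccontr)
    assume "\<not> N > 0"
    hence "N = 0" by simp
    hence "X = 0\<^sub>m N N" using X by (intro eq_matI, auto)
    thus False using X0 by simp
  qed
  have tr0: "trace X = 0"
  proof -
    have "z * trace X = trace X" using Ttrace[OF X] unfolding TX trace_smult[OF X] .
    hence "(z - 1) * trace X = 0" by (simp add: algebra_simps)
    thus ?thesis using z1 by simp
  qed
  define H where "H = (1/2) \<cdot>\<^sub>m (X + mat_adjoint X)"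
  define K where "K = (- \<i> / 2) \<cdot>\<^sub>m (X - mat_adjoint X)"
  have Hc: "H \<in> carrier_mat N N" unfolding H_def using X by auto
  have Kc: "K \<in> carrier_mat N N" unfolding K_def using X by auto
  have HH: "mat_adjoint H = H" unfolding H_def using X by (intro eq_matI, auto)
  have KH: "mat_adjoint K = K" unfolding K_def using X by (intro eq_matI, auto simp: algebra_simps)
  have trH: "trace H = 0" unfolding H_def using X tr0
    by (simp add: trace_smult[of _ N] trace_add[of _ N] trace_adjoint)
  have trK: "trace K = 0"
  proof -
    have XmX: "X - mat_adjoint X \<in> carrier_mat N N" using X by auto
    show ?thesis unfolding K_def trace_smult[OF XmX] trace_minus[OF X adj_carrier[OF X]] trace_adjoint[OF X] tr0 by simp
  qed
  have XHK: "X = H + \<i> \<cdot>\<^sub>m K" unfolding H_def K_def using X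
    by (intro eq_matI, auto simp: algebra_simps)
  have TXHK: "T X = T H + \<i> \<cdot>\<^sub>m T K"
    using XHK Tadd[OF Hc, of "\<i> \<cdot>\<^sub>m K"] Tsmult[OF Kc] Kc by simp
  from herm_T[OF Hc HH trH Np] have THH: "mat_adjoint (T H) = T H" and THb: "hs_norm (T H) \<le> C * hs_norm H" by auto
  from herm_T[OF Kc KH trK Np] have TKH: "mat_adjoint (T K) = T K" and TKb: "hs_norm (T K) \<le> C * hs_norm K" by auto
  have THc: "T H \<in> carrier_mat N N" using Tc[OF Hc] .
  have TKc: "T K \<in> carrier_mat N N" using Tc[OF Kc] .
  have C0: "C \<ge> 0" using Ccond(1) .
  have bH: "ssq N (T H) \<le> C^2 * ssq N H"
  proof -
    have "(hs_norm (T H))^2 \<le> (C * hs_norm H)^2" using THb hs_nonneg[OF THc] by (intro power_mono, auto)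
    thus ?thesis unfolding hs_sq[OF THc] power_mult_distrib hs_sq[OF Hc] .
  qed
  have bK: "ssq N (T K) \<le> C^2 * ssq N K"
  proof -
    have "(hs_norm (T K))^2 \<le> (C * hs_norm K)^2" using TKb hs_nonneg[OF TKc] by (intro power_mono, auto)
    thus ?thesis unfolding hs_sq[OF TKc] power_mult_distrib hs_sq[OF Kc] .
  qed
  have "(cmod z)^2 * ssq N X = ssq N (T X)" unfolding TX ssq_smult[OF X] ..
  also have "\<dots> = ssq N (T H) + ssq N (T K)" unfolding TXHK by (rule ssq_herm_sum[OF THc TKc THH TKH])
  also have "\<dots> \<le> C^2 * ssq N H + C^2 * ssq N K" using bH bK by simp
  also have "\<dots> = C^2 * ssq N X" unfolding XHK ssq_herm_sum[OF Hc Kc HH KH] by (simp add: algebra_simps)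
  finally have le: "(cmod z)^2 * ssq N X \<le> C^2 * ssq N X" .
  have "ssq N X \<noteq> 0" using ssq_zero[OF X] X0 by auto
  hence "ssq N X > 0" using ssq_nonneg[of N X] by simp
  hence "(cmod z)^2 \<le> C^2" using le by simp
  thus ?thesis using C0 by (rule power2_le_imp_le)
qed

end

theorem mainTheorem3:
  fixes N :: nat and T :: "complex mat \<Rightarrow> complex mat" and C :: real
  assumes "channel N T"
    and "is_dual N T T"
    and "bistochastic N T T"
    and "strictly_contractive N T C"
  shows "(\<forall>z. map_eigenvalue N T z \<longrightarrow> z \<noteq> 1 \<longrightarrow> cmod z \<le> C) \<and>
         (\<forall>\<sigma>. density N \<sigma> \<longrightarrow>
            vn_entropy (T \<sigma>) - vn_entropy \<sigma> \<ge>
              (1 - C^2) / 2 * (hs_norm (\<sigma> - (1 / of_nat N) \<cdot>\<^sub>m 1\<^sub>m N))^2)"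
proof -
  interpret chan N T C using assms by (unfold_locales)
  show ?thesis using eig_bound entropy_ineq unfolding Jm_def by blast
qed


end
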